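(* Let $(M_n,S_n)_{n\ge0}$ be a Markov random walk with irreducible positive recurrent driving chain on a countable set $\mathcal S$, and let $i,j\in\mathcal S$ be distinct. Let $\upsilon=\inf\{n\ge1:\tau_n(i)>\tau(j)\}$. Then: (a) there exists $x\ge0$ such that $\limsup_{y\to\infty}\mathbb P_j(S_{\tau(j)}>y)/\mathbb P_i(S_{\tau_\upsilon(i)}>y-x)<\infty$; (b) $\mathbb P_j(S_{\tau(j)}>0)>0$ implies $\mathbb P_i(S_{\tau_\upsilon(i)}>0)>0$.
   Context: $\mathcal S$ countable; $(M_n)_{n\ge0}$ irreducible positive recurrent Markov chain on $\mathcal S$. Markov random walk: $S_0=0$, $S_n=X_1+\dots+X_n$, the $X_n$ conditionally independent given $(M_n)$ with $\mathbb P((X_1,\dots,X_n)\in\cdot\mid M_0=i_0,\dots,M_n=i_n)=K_{i_0i_1}\otimes\cdots\otimes K_{i_{n-1}i_n}$ for a stochastic kernel $K$ from $\mathcal S^2$ to $\mathbb R$. $\mathbb P_i=\mathbb P(\cdot\mid M_0=i)$. $\tau(j)=\inf\{n\ge1:M_n=j\}$, $\tau_0(i)=0$, $\tau_n(i)$ the $n$-th return time to $i$. *)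

theory Defs
  imports "HOL-Probability.Probability"
begin

text \<open>Markov random walk with driving chain M (states in a countable type 's),
  increments X 1, X 2, ... (X 0 is unused), transition matrix p and kernel K.
  P i is the law given M 0 = i. The finite-dimensional distributions are fixed
  on product sets: the chain is Markov with transition matrix p, and given the
  chain the increments are independent with X k distributed as K (M (k-1)) (M k).\<close>

definition MRW ::
  "('s::countable \<Rightarrow> 'a measure) \<Rightarrow> ('s \<Rightarrow> 's \<Rightarrow> real) \<Rightarrow> ('s \<Rightarrow> 's \<Rightarrow> real measure)
    \<Rightarrow> (nat \<Rightarrow> 'a \<Rightarrow> 's) \<Rightarrow> (nat \<Rightarrow> 'a \<Rightarrow> real) \<Rightarrow> bool" where
  "MRW P p K M X \<longleftrightarrow>
     (\<forall>i. prob_space (P i)) \<and>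
     (\<forall>i n. M n \<in> measurable (P i) (count_space UNIV)) \<and>
     (\<forall>i n. X n \<in> borel_measurable (P i)) \<and>
     (\<forall>s t. prob_space (K s t) \<and> sets (K s t) = sets borel) \<and>
     (\<forall>i n (s::nat \<Rightarrow> 's) (B::nat \<Rightarrow> real set). (\<forall>k. B k \<in> sets borel) \<longrightarrow>
        measure (P i) {\<omega> \<in> space (P i). (\<forall>k\<le>n. M k \<omega> = s k) \<and> (\<forall>k\<in>{1..n}. X k \<omega> \<in> B k)}
        = (if s 0 = i then 1 else 0) *
          (\<Prod>k\<in>{1..n}. p (s (k - 1)) (s k) * measure (K (s (k - 1)) (s k)) (B k)))"

definition Ssum :: "(nat \<Rightarrow> 'a \<Rightarrow> real) \<Rightarrow> nat \<Rightarrow> 'a \<Rightarrow> real" where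
  "Ssum X n \<omega> = (\<Sum>k\<in>{1..n}. X k \<omega>)"

definition hit_time :: "(nat \<Rightarrow> 'a \<Rightarrow> 's) \<Rightarrow> 's \<Rightarrow> 'a \<Rightarrow> enat" where
  "hit_time M j \<omega> = (if \<exists>n\<ge>1. M n \<omega> = j then enat (LEAST n. 1 \<le> n \<and> M n \<omega> = j) else \<infinity>)"

fun ret_time :: "(nat \<Rightarrow> 'a \<Rightarrow> 's) \<Rightarrow> 's \<Rightarrow> nat \<Rightarrow> 'a \<Rightarrow> enat" where
  "ret_time M i 0 \<omega> = 0"
| "ret_time M i (Suc n) \<omega> =
     (case ret_time M i n \<omega> of \<infinity> \<Rightarrow> \<infinity>
      | enat m \<Rightarrow> (if \<exists>k>m. M k \<omega> = i then enat (LEAST k. m < k \<and> M k \<omega> = i) else \<infinity>))"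

definition ups_time :: "(nat \<Rightarrow> 'a \<Rightarrow> 's) \<Rightarrow> 's \<Rightarrow> 's \<Rightarrow> 'a \<Rightarrow> enat" where
  "ups_time M i j \<omega> =
     (if \<exists>n\<ge>1. ret_time M i n \<omega> > hit_time M j \<omega>
      then ret_time M i (LEAST n. 1 \<le> n \<and> ret_time M i n \<omega> > hit_time M j \<omega>) \<omega>
      else \<infinity>)"

definition S_at_gt :: "'a measure \<Rightarrow> (nat \<Rightarrow> 'a \<Rightarrow> real) \<Rightarrow> ('a \<Rightarrow> enat) \<Rightarrow> real \<Rightarrow> 'a set" where
  "S_at_gt Q X T y = {\<omega> \<in> space Q. T \<omega> \<noteq> \<infinity> \<and> Ssum X (the_enat (T \<omega>)) \<omega> > y}"

definition irreducible_chain :: "('s \<Rightarrow> 'a measure) \<Rightarrow> (nat \<Rightarrow> 'a \<Rightarrow> 's) \<Rightarrow> bool" where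
  "irreducible_chain P M \<longleftrightarrow> (\<forall>i j. \<exists>n. measure (P i) {\<omega> \<in> space (P i). M n \<omega> = j} > 0)"

definition positive_recurrent :: "('s \<Rightarrow> 'a measure) \<Rightarrow> (nat \<Rightarrow> 'a \<Rightarrow> 's) \<Rightarrow> bool" where
  "positive_recurrent P M \<longleftrightarrow>
     (\<forall>i. (\<integral>\<^sup>+\<omega>. ennreal_of_enat (hit_time M i \<omega>) \<partial>P i) < \<infinity>)"

end

theory Submission
  imports Defs
begin



lemma transfer_sum:
  fixes Q1 :: "'a measure" and Q2 :: "'b measure" and n :: nat
    and g1 :: "nat \<Rightarrow> 'a \<Rightarrow> real" and g2 :: "nat \<Rightarrow> 'b \<Rightarrow> real"
  assumes F1: "finite_measure Q1" and F2: "finite_measure Q2"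
    and E1: "E1 \<in> sets Q1" and E2: "E2 \<in> sets Q2"
    and g1: "\<And>k. g1 k \<in> borel_measurable Q1" and g2: "\<And>k. g2 k \<in> borel_measurable Q2"
    and c: "c \<ge> 0"
    and box: "\<And>B. (\<And>k. B k \<in> sets borel) \<Longrightarrow>
       measure Q1 (E1 \<inter> {\<omega>\<in>space Q1. \<forall>k\<in>{1..n}. g1 k \<omega> \<in> B k})
       = c * measure Q2 (E2 \<inter> {\<omega>\<in>space Q2. \<forall>k\<in>{1..n}. g2 k \<omega> \<in> B k})"
  shows "measure Q1 (E1 \<inter> {\<omega>\<in>space Q1. (\<Sum>k\<in>{1..n}. g1 k \<omega>) > y})
       = c * measure Q2 (E2 \<inter> {\<omega>\<in>space Q2. (\<Sum>k\<in>{1..n}. g2 k \<omega>) > y})"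
proof -
  interpret Q1: finite_measure Q1 by fact
  interpret Q2: finite_measure Q2 by fact
  define I where "I = {1..n::nat}"
  define N where "N = (PiM I (\<lambda>_. borel) :: (nat \<Rightarrow> real) measure)"
  define f1 where "f1 = (\<lambda>\<omega>. \<lambda>k\<in>I. g1 k \<omega>)"
  define f2 where "f2 = (\<lambda>\<omega>. \<lambda>k\<in>I. g2 k \<omega>)"
  have f1m: "f1 \<in> measurable (restrict_space Q1 E1) N"
    unfolding f1_def N_def
    by (intro measurable_restrict_space1 measurable_restrict) (use g1 in auto)
  have f2m: "f2 \<in> measurable (restrict_space Q2 E2) N"
    unfolding f2_def N_def
    by (intro measurable_restrict_space1 measurable_restrict) (use g2 in auto)
  define \<nu>1 where "\<nu>1 = distr (restrict_space Q1 E1) N f1"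
  define \<nu>2 where "\<nu>2 = scale_measure (ennreal c) (distr (restrict_space Q2 E2) N f2)"
  have key1: "emeasure \<nu>1 A = emeasure Q1 (E1 \<inter> f1 -` A)" if A: "A \<in> sets N" for A
  proof -
    have "emeasure \<nu>1 A = emeasure (restrict_space Q1 E1) (f1 -` A \<inter> space (restrict_space Q1 E1))"
      unfolding \<nu>1_def using A f1m by (simp add: emeasure_distr)
    also have "\<dots> = emeasure Q1 (f1 -` A \<inter> (E1 \<inter> space Q1))"
      using E1 by (subst emeasure_restrict_space) (auto simp: space_restrict_space)
    also have "f1 -` A \<inter> (E1 \<inter> space Q1) = E1 \<inter> f1 -` A"
      using E1 sets.sets_into_space by auto
    finally show ?thesis .
  qed
  have key2: "emeasure \<nu>2 A = ennreal c * emeasure Q2 (E2 \<inter> f2 -` A)" if A: "A \<in> sets N" for A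
  proof -
    have "emeasure \<nu>2 A = ennreal c * emeasure (restrict_space Q2 E2) (f2 -` A \<inter> space (restrict_space Q2 E2))"
      unfolding \<nu>2_def using A f2m by (simp add: emeasure_distr)
    also have "emeasure (restrict_space Q2 E2) (f2 -` A \<inter> space (restrict_space Q2 E2)) = emeasure Q2 (f2 -` A \<inter> (E2 \<inter> space Q2))"
      using E2 by (subst emeasure_restrict_space) (auto simp: space_restrict_space)
    also have "f2 -` A \<inter> (E2 \<inter> space Q2) = E2 \<inter> f2 -` A"
      using E2 sets.sets_into_space by auto
    finally show ?thesis .
  qed
  have eq: "\<nu>1 = \<nu>2"
  proof (rule measure_eqI_PiM_finite[where I=I and M="\<lambda>_. borel" and A="\<lambda>_. space N"])
    show "finite I" unfolding I_def by simp
    show "sets \<nu>1 = sets (PiM I (\<lambda>_. borel))" unfolding \<nu>1_def N_def by simp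
    show "sets \<nu>2 = sets (PiM I (\<lambda>_. borel))" unfolding \<nu>2_def N_def by simp
    show "range (\<lambda>_. space N) \<subseteq> prod_algebra I (\<lambda>_. borel)"
      unfolding N_def space_PiM using prod_algebraI_finite[of I "\<lambda>_. UNIV" "\<lambda>_. borel"]
      by (auto simp: I_def)
    show "(\<Union>i::nat. space N) = space (PiM I (\<lambda>_. borel))" unfolding N_def by simp
    show "emeasure \<nu>1 (space N) \<noteq> \<infinity>" for i :: nat
      using key1[of "space N"] Q1.emeasure_real by simp
    fix A assume A: "\<And>i. i \<in> I \<Longrightarrow> A i \<in> sets (borel :: real measure)"
    define B where "B k = (if k \<in> I then A k else UNIV)" for k
    have B: "B k \<in> sets borel" for k using A by (auto simp: B_def)
    have AN: "Pi\<^sub>E I A \<in> sets N" unfolding N_def using A by (intro sets_PiM_I_finite) (auto simp: I_def)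
    have s1: "E1 \<inter> f1 -` Pi\<^sub>E I A = E1 \<inter> {\<omega>\<in>space Q1. \<forall>k\<in>{1..n}. g1 k \<omega> \<in> B k}"
      using sets.sets_into_space[OF E1] by (auto simp: f1_def B_def I_def Pi_iff)
    have s2: "E2 \<inter> f2 -` Pi\<^sub>E I A = E2 \<inter> {\<omega>\<in>space Q2. \<forall>k\<in>{1..n}. g2 k \<omega> \<in> B k}"
      using sets.sets_into_space[OF E2] by (auto simp: f2_def B_def I_def Pi_iff)
    show "emeasure \<nu>1 (Pi\<^sub>E I A) = emeasure \<nu>2 (Pi\<^sub>E I A)"
      unfolding key1[OF AN] key2[OF AN] s1 s2 Q1.emeasure_eq_measure Q2.emeasure_eq_measure
      using box[OF B] c by (simp add: ennreal_mult)
  qed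
  define S where "S = {x\<in>space N. (\<Sum>k\<in>I. x k) > y}"
  have SN: "S \<in> sets N" unfolding S_def N_def by measurable
  have t1: "E1 \<inter> f1 -` S = E1 \<inter> {\<omega>\<in>space Q1. (\<Sum>k\<in>{1..n}. g1 k \<omega>) > y}"
    using sets.sets_into_space[OF E1] by (auto simp: f1_def S_def I_def N_def space_PiM)
  have t2: "E2 \<inter> f2 -` S = E2 \<inter> {\<omega>\<in>space Q2. (\<Sum>k\<in>{1..n}. g2 k \<omega>) > y}"
    using sets.sets_into_space[OF E2] by (auto simp: f2_def S_def I_def N_def space_PiM)
  have "emeasure \<nu>1 S = emeasure \<nu>2 S" using eq by simp
  then have "ennreal (measure Q1 (E1 \<inter> {\<omega>\<in>space Q1. (\<Sum>k\<in>{1..n}. g1 k \<omega>) > y}))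
     = ennreal c * ennreal (measure Q2 (E2 \<inter> {\<omega>\<in>space Q2. (\<Sum>k\<in>{1..n}. g2 k \<omega>) > y}))"
    unfolding key1[OF SN] key2[OF SN] t1 t2 Q1.emeasure_eq_measure Q2.emeasure_eq_measure .
  then show ?thesis using c by (simp add: ennreal_mult[symmetric])
qed




locale mrw =
  fixes P :: "'s::countable \<Rightarrow> 'a measure" and p :: "'s \<Rightarrow> 's \<Rightarrow> real"
    and K :: "'s \<Rightarrow> 's \<Rightarrow> real measure" and M :: "nat \<Rightarrow> 'a \<Rightarrow> 's"
    and X :: "nat \<Rightarrow> 'a \<Rightarrow> real"
  assumes MRW: "MRW P p K M X"
begin

lemma prob: "prob_space (P i)" using MRW by (simp add: MRW_def)
lemma emP: "emeasure (P i) A = ennreal (measure (P i) A)"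
  using finite_measure.emeasure_eq_measure[OF prob_space.finite_measure[OF prob]] .

lemma Mm[measurable]: "M n \<in> measurable (P i) (count_space UNIV)" using MRW by (simp add: MRW_def)
lemma Xm[measurable]: "X n \<in> borel_measurable (P i)" using MRW by (simp add: MRW_def)
lemma Kprob: "prob_space (K s t)" using MRW by (simp add: MRW_def)
lemma Ksets: "sets (K s t) = sets borel" using MRW by (simp add: MRW_def)

lemma fdd: "(\<And>k. B k \<in> sets borel) \<Longrightarrow>
        measure (P i) {\<omega> \<in> space (P i). (\<forall>k\<le>n. M k \<omega> = s k) \<and> (\<forall>k\<in>{1..n}. X k \<omega> \<in> B k)}
        = (if s 0 = i then 1 else 0) *
          (\<Prod>k\<in>{1..n}. p (s (k - 1)) (s k) * measure (K (s (k - 1)) (s k)) (B k))"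
  using MRW unfolding MRW_def by blast

definition ev :: "'s \<Rightarrow> 's list \<Rightarrow> 'a set" where
  "ev i w = {\<omega> \<in> space (P i). \<forall>k<length w. M k \<omega> = w!k}"

lemma ev_sets[measurable]: "ev i w \<in> sets (P i)"
proof -
  have "ev i w = {\<omega> \<in> space (P i). \<forall>k\<in>{..<length w}. M k \<omega> = w!k}"
    by (auto simp: ev_def)
  also have "\<dots> \<in> sets (P i)"
    by measurable
  finally show ?thesis .
qed

lemma box:
  assumes "length w = Suc N" "\<And>k. k \<in> {1..N} \<Longrightarrow> B k \<in> sets borel"
  shows "measure (P i) (ev i w \<inter> {\<omega>\<in>space (P i). \<forall>k\<in>{1..N}. X k \<omega> \<in> B k})
    = (if w!0 = i then 1 else 0) * (\<Prod>k\<in>{1..N}. p (w!(k-1)) (w!k) * measure (K (w!(k-1)) (w!k)) (B k))"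
proof -
  define B' where "B' k = (if k \<in> {1..N} then B k else UNIV)" for k
  have B': "B' k \<in> sets borel" for k using assms(2) by (auto simp: B'_def)
  have "ev i w \<inter> {\<omega>\<in>space (P i). \<forall>k\<in>{1..N}. X k \<omega> \<in> B k}
     = {\<omega> \<in> space (P i). (\<forall>k\<le>N. M k \<omega> = w!k) \<and> (\<forall>k\<in>{1..N}. X k \<omega> \<in> B' k)}"
    using assms(1) by (auto simp: ev_def B'_def less_Suc_eq_le)
  moreover have "(\<Prod>k\<in>{1..N}. p (w!(k-1)) (w!k) * measure (K (w!(k-1)) (w!k)) (B k))
     = (\<Prod>k\<in>{1..N}. p (w!(k-1)) (w!k) * measure (K (w!(k-1)) (w!k)) (B' k))"
    by (intro prod.cong) (auto simp: B'_def)
  ultimately show ?thesis using fdd[OF B', of i N "\<lambda>k. w!k"] by simp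
qed

lemma K_UNIV: "measure (K s t) UNIV = 1"
proof -
  interpret prob_space "K s t" by (rule Kprob)
  have "space (K s t) = UNIV" using Ksets[of s t] sets_eq_imp_space_eq by fastforce
  then show ?thesis using prob_space by simp
qed

lemma ev_measure:
  assumes "length w = Suc N"
  shows "measure (P i) (ev i w) = (if w!0 = i then 1 else 0) * (\<Prod>k\<in>{1..N}. p (w!(k-1)) (w!k))"
proof -
  have "ev i w \<inter> {\<omega>\<in>space (P i). \<forall>k\<in>{1..N}. X k \<omega> \<in> UNIV} = ev i w"
    by (auto simp: ev_def)
  then show ?thesis using box[OF assms, of "\<lambda>_. UNIV" i] by (simp add: K_UNIV)
qed

lemma p_nonneg: "p s t \<ge> 0"
proof -
  interpret prob_space "P s" by (rule prob)
  have "measure (P s) (ev s [s,t]) = p s t"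
    using ev_measure[of "[s,t]" 1 s] by simp
  then show ?thesis by (metis measure_nonneg)
qed

end



lemma hit_eq:
  assumes "1 \<le> h" "M h \<omega> = j" "\<And>k. 1 \<le> k \<Longrightarrow> k < h \<Longrightarrow> M k \<omega> \<noteq> j"
  shows "hit_time M j \<omega> = enat h"
proof -
  have "(LEAST n. 1 \<le> n \<and> M n \<omega> = j) = h"
    by (rule Least_equality) (use assms in \<open>auto simp: not_less[symmetric]\<close>)
  then show ?thesis using assms unfolding hit_time_def by auto
qed

lemma hit_enatD:
  assumes "hit_time M j \<omega> = enat h"
  shows "1 \<le> h" "M h \<omega> = j" "\<And>k. 1 \<le> k \<Longrightarrow> k < h \<Longrightarrow> M k \<omega> \<noteq> j"
proof -
  have ex: "\<exists>n\<ge>1. M n \<omega> = j" using assms unfolding hit_time_def by (auto split: if_splits)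
  then have h: "h = (LEAST n. 1 \<le> n \<and> M n \<omega> = j)" using assms unfolding hit_time_def by auto
  from ex have "1 \<le> h \<and> M h \<omega> = j" unfolding h by (rule LeastI_ex)
  then show "1 \<le> h" "M h \<omega> = j" by auto
  show "M k \<omega> \<noteq> j" if "1 \<le> k" "k < h" for k
    using not_less_Least[of k "\<lambda>n. 1 \<le> n \<and> M n \<omega> = j"] that unfolding h by auto
qed

lemma ret_ge: "ret_time M i n \<omega> = enat m \<Longrightarrow> n \<le> m"
proof (induction n arbitrary: m)
  case 0 then show ?case by simp
next
  case (Suc n)
  then obtain m0 where m0: "ret_time M i n \<omega> = enat m0"
    by (cases "ret_time M i n \<omega>") auto
  with Suc.prems have ex: "\<exists>k>m0. M k \<omega> = i" and m: "m = (LEAST k. m0 < k \<and> M k \<omega> = i)"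
    by (auto split: if_splits)
  from ex have "m0 < m" unfolding m by (metis (mono_tags, lifting) LeastI_ex)
  with Suc.IH[OF m0] show ?case by simp
qed

lemma ret_ge': "ret_time M i n \<omega> = \<infinity> \<or> enat n \<le> ret_time M i n \<omega>"
  by (cases "ret_time M i n \<omega>") (auto dest: ret_ge)

lemma ups_eq:
  assumes hit: "hit_time M j \<omega> = enat h" and hL: "h < L" and L: "M L \<omega> = i"
    and nv: "\<And>k. h < k \<Longrightarrow> k < L \<Longrightarrow> M k \<omega> \<noteq> i"
  shows "ups_time M i j \<omega> = enat L"
proof -
  define Q where "Q n \<longleftrightarrow> 1 \<le> n \<and> ret_time M i n \<omega> > hit_time M j \<omega>" for n
  have "Q (Suc h)"
  proof -
    have "ret_time M i (Suc h) \<omega> = \<infinity> \<or> enat (Suc h) \<le> ret_time M i (Suc h) \<omega>"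
      by (rule ret_ge')
    moreover have "enat h < enat (Suc h)" by simp
    ultimately show ?thesis unfolding Q_def hit
      by (metis enat_ord_code(4) le_add1 order_less_le_trans plus_1_eq_Suc)
  qed
  then have ex: "\<exists>n\<ge>1. ret_time M i n \<omega> > hit_time M j \<omega>" unfolding Q_def by auto
  define n0 where "n0 = (LEAST n. Q n)"
  have Qn0: "Q n0" unfolding n0_def by (rule LeastI) fact
  then obtain n1 where n1: "n0 = Suc n1" unfolding Q_def by (cases n0) auto
  have le: "ret_time M i n1 \<omega> \<le> enat h"
  proof (cases n1)
    case 0 then show ?thesis by (simp add: zero_enat_def)
  next
    case (Suc n2)
    have "\<not> Q n1" using not_less_Least[of n1 Q] unfolding n0_def[symmetric] n1 by auto
    then show ?thesis unfolding Q_def using Suc hit by (auto simp: not_less)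
  qed
  then obtain m where m: "ret_time M i n1 \<omega> = enat m" "m \<le> h"
    by (cases "ret_time M i n1 \<omega>") auto
  have exk: "\<exists>k>m. M k \<omega> = i" using L hL m by (intro exI[of _ L]) auto
  define q where "q = (LEAST k. m < k \<and> M k \<omega> = i)"
  have rq: "ret_time M i n0 \<omega> = enat q" unfolding n1 q_def using m exk by simp
  have q: "m < q \<and> M q \<omega> = i" unfolding q_def by (rule LeastI_ex) (use exk in auto)
  have "q \<le> L" unfolding q_def by (rule Least_le) (use m hL L in auto)
  moreover have "h < q" using Qn0 rq hit unfolding Q_def by auto
  ultimately have "q = L" using nv q by (cases "q < L") auto
  have "ups_time M i j \<omega> = ret_time M i n0 \<omega>"
    unfolding ups_time_def n0_def Q_def using ex by simp
  then show ?thesis using rq \<open>q = L\<close> by simp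
qed




lemma prod_pos_each:
  fixes f :: "nat \<Rightarrow> real"
  assumes "finite A" "\<And>k. k \<in> A \<Longrightarrow> f k \<ge> 0" "prod f A > 0" "k \<in> A"
  shows "f k > 0"
proof -
  have "f k \<noteq> 0"
  proof
    assume "f k = 0"
    then have "prod f A = 0" using assms(1,4) by (metis prod_zero_iff)
    then show False using assms(3) by simp
  qed
  with assms show ?thesis by force
qed

context mrw begin

lemma ev_null_or_pos:
  assumes "irreducible_chain P M" "s \<noteq> t"
  shows "\<exists>(n::nat) f. 1 \<le> n \<and> f 0 = s \<and> f n = t \<and> (\<forall>k\<in>{1..n}. p (f (k-1)) (f k) > 0)"
proof -
  obtain n where pos: "measure (P s) {\<omega> \<in> space (P s). M n \<omega> = t} > 0"
    using assms(1) unfolding irreducible_chain_def by blast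
  define W where "W = {w :: 's list. length w = Suc n \<and> w!n = t}"
  have eq: "{\<omega> \<in> space (P s). M n \<omega> = t} = (\<Union>w\<in>W. ev s w)"
  proof (rule set_eqI, rule iffI)
    fix \<omega> assume "\<omega> \<in> {\<omega> \<in> space (P s). M n \<omega> = t}"
    then have \<omega>: "\<omega> \<in> space (P s)" "M n \<omega> = t" by auto
    let ?w = "map (\<lambda>k. M k \<omega>) [0..<Suc n]"
    have "?w \<in> W" "\<omega> \<in> ev s ?w" using \<omega> by (auto simp: W_def ev_def simp del: upt_Suc)
    then show "\<omega> \<in> (\<Union>w\<in>W. ev s w)" by blast
  next
    fix \<omega> assume "\<omega> \<in> (\<Union>w\<in>W. ev s w)"
    then show "\<omega> \<in> {\<omega> \<in> space (P s). M n \<omega> = t}" by (auto simp: W_def ev_def)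
  qed
  have "\<exists>w\<in>W. measure (P s) (ev s w) \<noteq> 0"
  proof (rule ccontr)
    assume "\<not> ?thesis"
    then have "(\<Union>w\<in>W. ev s w) \<in> null_sets (P s)"
      by (intro null_sets_UN') (auto simp: null_sets_def emP)
    then show False using pos eq emP[of s] by (simp add: null_sets_def)
  qed
  then obtain w where w: "w \<in> W" "measure (P s) (ev s w) \<noteq> 0" by blast
  have len: "length w = Suc n" using w by (simp add: W_def)
  from ev_measure[OF len, of s] w(2)
  have w0: "w!0 = s" and pr: "(\<Prod>k\<in>{1..n}. p (w!(k-1)) (w!k)) \<noteq> 0"
    by (auto split: if_splits)
  have "(\<Prod>k\<in>{1..n}. p (w!(k-1)) (w!k)) > 0"
  proof -
    have "(\<Prod>k\<in>{1..n}. p (w!(k-1)) (w!k)) \<ge> 0" by (intro prod_nonneg) (simp add: p_nonneg)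
    with pr show ?thesis by linarith
  qed
  then have "\<forall>k\<in>{1..n}. p (w!(k-1)) (w!k) > 0"
    using prod_pos_each[of "{1..n}" "\<lambda>k. p (w!(k-1)) (w!k)"] p_nonneg by auto
  moreover have "n \<noteq> 0" using w0 w(1) assms(2) by (cases n) (auto simp: W_def)
  ultimately have "1 \<le> n \<and> w!0 = s \<and> w!n = t \<and> (\<forall>k\<in>{1..n}. p (w!(k-1)) (w!k) > 0)"
    using w0 w(1) by (auto simp: W_def)
  then show ?thesis by (intro exI[of _ n] exI[of _ "nth w"]) simp
qed

definition ppath :: "'s \<Rightarrow> 's \<Rightarrow> nat \<Rightarrow> (nat \<Rightarrow> 's) \<Rightarrow> bool" where
  "ppath s t n f \<longleftrightarrow> 1 \<le> n \<and> f 0 = s \<and> f n = t \<and> (\<forall>k\<in>{1..n}. p (f (k-1)) (f k) > 0)"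

lemma shortest_path:
  assumes "irreducible_chain P M" "s \<noteq> t"
  shows "\<exists>n f. ppath s t n f \<and> (\<forall>k. 1 \<le> k \<longrightarrow> k \<le> n \<longrightarrow> f k \<noteq> s) \<and> (\<forall>k<n. f k \<noteq> t)"
proof -
  have ex: "\<exists>n f. ppath s t n f" using ev_null_or_pos[OF assms] unfolding ppath_def by blast
  define n where "n = (LEAST n. \<exists>f. ppath s t n f)"
  obtain f where f: "ppath s t n f" unfolding n_def using LeastI_ex[OF ex] by blast
  have min: "\<not> ppath s t m g" if "m < n" for m g
    using not_less_Least[of m "\<lambda>n. \<exists>f. ppath s t n f"] that unfolding n_def by auto
  have A: "f k \<noteq> s" if k: "1 \<le> k" "k \<le> n" for k
  proof
    assume fk: "f k = s"
    have "k < n" using fk f k assms(2) unfolding ppath_def by (cases "k = n") auto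
    have "ppath s t (n - k) (\<lambda>m. f (m + k))"
      unfolding ppath_def
    proof (intro conjI ballI)
      fix m assume m: "m \<in> {1..n-k}"
      then have "p (f (m + k - 1)) (f (m + k)) > 0" using f k unfolding ppath_def
        by (metis (no_types, lifting) add_diff_cancel_left' atLeastAtMost_iff le_add2 le_diff_conv
            le_trans ordered_cancel_comm_monoid_diff_class.le_diff_conv2)
      moreover have "m - 1 + k = m + k - 1" using m by auto
      ultimately show "p (f (m - 1 + k)) (f (m + k)) > 0" by simp
    qed (use fk f \<open>k < n\<close> in \<open>auto simp: ppath_def\<close>)
    then show False using min[of "n - k"] k by auto
  qed
  have B: "f k \<noteq> t" if k: "k < n" for k
  proof
    assume fk: "f k = t"
    have "k \<noteq> 0" using fk f assms(2) unfolding ppath_def by (cases k) auto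
    have "ppath s t k f" using f fk k \<open>k \<noteq> 0\<close> unfolding ppath_def by auto
    then show False using min[OF k] by auto
  qed
  show ?thesis using f A B by blast
qed

lemma K_lower: "\<exists>r. measure (K s t) {r..} > 0"
proof (rule ccontr)
  interpret prob_space "K s t" by (rule Kprob)
  have sp: "space (K s t) = UNIV" using Ksets[of s t] sets_eq_imp_space_eq by fastforce
  have meas: "{r..} \<in> sets (K s t)" for r :: real using Ksets[of s t] by simp
  assume "\<not> ?thesis"
  then have "\<And>r. measure (K s t) {r..} = 0" by (meson measure_nonneg not_le order.antisym)
  then have "(\<Union>m::nat. {- real m..}) \<in> null_sets (K s t)"
    using meas by (intro null_sets_UN) (auto simp: null_sets_def emeasure_eq_measure)
  moreover have "(\<Union>m::nat. {- real m..}) = UNIV"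
  proof safe
    fix x :: real
    obtain m :: nat where "-x \<le> real m" using real_arch_simple by blast
    then show "x \<in> (\<Union>m::nat. {- real m..})" by (intro UN_I[of m]) auto
  qed auto
  ultimately show False using sp prob_space by (simp add: null_sets_def emeasure_eq_measure)
qed

lemma K_lower_fin:
  "\<exists>r\<le>0. \<forall>k\<in>{1..N::nat}. measure (K (g k) (h k)) {r..} > 0"
proof -
  have "\<forall>k. \<exists>r. measure (K (g k) (h k)) {r..} > 0" using K_lower by blast
  then obtain rr where rr: "\<And>k. measure (K (g k) (h k)) {rr k..} > 0" by metis
  define r where "r = - (\<Sum>k\<in>{1..N}. \<bar>rr k\<bar>)"
  have "r \<le> 0" unfolding r_def by (simp add: sum_nonneg)
  moreover have "measure (K (g k) (h k)) {r..} > 0" if k: "k \<in> {1..N}" for k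
  proof -
    interpret prob_space "K (g k) (h k)" by (rule Kprob)
    have "\<bar>rr k\<bar> \<le> (\<Sum>k\<in>{1..N}. \<bar>rr k\<bar>)"
      using k by (intro member_le_sum) auto
    then have "r \<le> rr k" unfolding r_def by linarith
    then have "measure (K (g k) (h k)) {rr k..} \<le> measure (K (g k) (h k)) {r..}"
      using Ksets[of "g k" "h k"] by (intro finite_measure_mono) auto
    with rr[of k] show ?thesis by linarith
  qed
  ultimately show ?thesis by blast
qed

end



lemma ret_visit: "ret_time M i n \<omega> = enat m \<Longrightarrow> 1 \<le> n \<Longrightarrow> M m \<omega> = i"
proof (cases n)
  case (Suc n1)
  assume r: "ret_time M i n \<omega> = enat m"
  then obtain m0 where m0: "ret_time M i n1 \<omega> = enat m0"
    unfolding Suc by (cases "ret_time M i n1 \<omega>") auto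
  with r Suc have ex: "\<exists>k>m0. M k \<omega> = i" and m: "m = (LEAST k. m0 < k \<and> M k \<omega> = i)"
    by (auto split: if_splits)
  from ex show ?thesis unfolding m by (metis (mono_tags, lifting) LeastI_ex)
qed simp

lemma ups_enatD:
  assumes "ups_time M i j \<omega> = enat L"
  shows "\<exists>h. hit_time M j \<omega> = enat h \<and> h < L \<and> M L \<omega> = i \<and> (\<forall>k. h < k \<longrightarrow> k < L \<longrightarrow> M k \<omega> \<noteq> i)"
proof -
  have ex: "\<exists>n\<ge>1. ret_time M i n \<omega> > hit_time M j \<omega>"
    using assms unfolding ups_time_def by (auto split: if_splits)
  define n0 where "n0 = (LEAST n. 1 \<le> n \<and> ret_time M i n \<omega> > hit_time M j \<omega>)"
  have L: "ret_time M i n0 \<omega> = enat L" using assms ex unfolding ups_time_def n0_def by simp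
  have n0: "1 \<le> n0 \<and> ret_time M i n0 \<omega> > hit_time M j \<omega>" unfolding n0_def by (rule LeastI_ex) fact
  then obtain h where h: "hit_time M j \<omega> = enat h" "h < L" using L by (cases "hit_time M j \<omega>") auto
  have hLv: "M L \<omega> = i" using ret_visit[OF L] n0 by simp
  define L' where "L' = (LEAST k. h < k \<and> M k \<omega> = i)"
  have L': "h < L' \<and> M L' \<omega> = i" unfolding L'_def by (rule LeastI[of _ L]) (use h hLv in auto)
  have nv: "M k \<omega> \<noteq> i" if "h < k" "k < L'" for k
    using not_less_Least[of k "\<lambda>k. h < k \<and> M k \<omega> = i"] that unfolding L'_def by auto
  have "ups_time M i j \<omega> = enat L'" using ups_eq[OF h(1)] L' nv by blast
  then have "L = L'" using assms by simp
  then show ?thesis using h hLv nv by blast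
qed

context mrw begin

definition good :: "'s \<Rightarrow> 's \<Rightarrow> 's list \<Rightarrow> bool" where
  "good i j w \<longleftrightarrow> (\<exists>h L. length w = Suc L \<and> 1 \<le> h \<and> h < L \<and> w!h = j \<and> (\<forall>k. 1\<le>k \<longrightarrow> k<h \<longrightarrow> w!k \<noteq> j)
      \<and> w!L = i \<and> (\<forall>k. h<k \<longrightarrow> k<L \<longrightarrow> w!k \<noteq> i))"

definition Gset :: "'s \<Rightarrow> 's list \<Rightarrow> real \<Rightarrow> 'a set" where
  "Gset i w z = ev i w \<inter> {\<omega>\<in>space (P i). Ssum X (length w - 1) \<omega> > z}"

lemma Gset_sets[measurable]: "Gset i w z \<in> sets (P i)"
  unfolding Gset_def Ssum_def by measurable

lemma ev_path: "\<omega> \<in> ev i w \<Longrightarrow> w = map (\<lambda>k. M k \<omega>) [0..<length w]"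
  by (auto simp: ev_def intro!: nth_equalityI)

lemma good_ups:
  assumes "good i j w" "\<omega> \<in> ev i w"
  shows "ups_time M i j \<omega> = enat (length w - 1)"
proof -
  obtain h L where hL: "length w = Suc L" "1 \<le> h" "h < L" "w!h = j" "\<forall>k. 1\<le>k \<longrightarrow> k<h \<longrightarrow> w!k \<noteq> j"
      "w!L = i" "\<forall>k. h<k \<longrightarrow> k<L \<longrightarrow> w!k \<noteq> i"
    using assms(1) unfolding good_def by blast
  have Mk: "M k \<omega> = w!k" if "k \<le> L" for k using assms(2) that hL(1) by (auto simp: ev_def)
  have hit: "hit_time M j \<omega> = enat h"
    by (rule hit_eq) (use hL Mk in auto)
  show ?thesis using ups_eq[OF hit hL(3)] hL Mk by auto
qed

lemma ups_set_eq:
  "S_at_gt (P i) X (ups_time M i j) z = (\<Union>w\<in>{w. good i j w}. Gset i w z)"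
proof (rule set_eqI, rule iffI)
  fix \<omega> assume "\<omega> \<in> S_at_gt (P i) X (ups_time M i j) z"
  then obtain L where \<omega>: "\<omega> \<in> space (P i)" "ups_time M i j \<omega> = enat L" "Ssum X L \<omega> > z"
    unfolding S_at_gt_def by (cases "ups_time M i j \<omega>") auto
  obtain h where h: "hit_time M j \<omega> = enat h" "h < L" "M L \<omega> = i" "\<forall>k. h < k \<longrightarrow> k < L \<longrightarrow> M k \<omega> \<noteq> i"
    using ups_enatD[OF \<omega>(2)] by blast
  define w where "w = map (\<lambda>k. M k \<omega>) [0..<Suc L]"
  have "good i j w" unfolding good_def w_def
    using h hit_enatD[OF h(1)] by (intro exI[of _ h] exI[of _ L]) (auto simp del: upt_Suc)
  moreover have "\<omega> \<in> Gset i w z" using \<omega> unfolding Gset_def ev_def w_def by (auto simp del: upt_Suc)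
  ultimately show "\<omega> \<in> (\<Union>w\<in>{w. good i j w}. Gset i w z)" by blast
next
  fix \<omega> assume "\<omega> \<in> (\<Union>w\<in>{w. good i j w}. Gset i w z)"
  then obtain w where w: "good i j w" "\<omega> \<in> Gset i w z" by blast
  then show "\<omega> \<in> S_at_gt (P i) X (ups_time M i j) z"
    using good_ups[OF w(1)] unfolding Gset_def S_at_gt_def by auto
qed

lemma ups_set_sets[measurable]: "S_at_gt (P i) X (ups_time M i j) z \<in> sets (P i)"
  unfolding ups_set_eq by (intro sets.countable_UN'') (auto intro: countableI_type)

lemma G_sum_le:
  assumes cW: "countable W" and inj: "inj_on \<Psi> W" and g: "\<And>w. w \<in> W \<Longrightarrow> good i j (\<Psi> w)"
  shows "(\<integral>\<^sup>+w. emeasure (P i) (Gset i (\<Psi> w) z) \<partial>count_space W)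
     \<le> emeasure (P i) (S_at_gt (P i) X (ups_time M i j) z)"
proof -
  note \<open>countable W\<close>
  have disj: "disjoint_family_on (\<lambda>w. Gset i (\<Psi> w) z) W"
  unfolding disjoint_family_on_def
  proof (intro ballI impI)
    fix w1 w2 assume w: "w1 \<in> W" "w2 \<in> W" "w1 \<noteq> w2"
    show "Gset i (\<Psi> w1) z \<inter> Gset i (\<Psi> w2) z = {}"
    proof (rule ccontr)
      assume "\<not> ?thesis"
      then obtain \<omega> where \<omega>: "\<omega> \<in> ev i (\<Psi> w1)" "\<omega> \<in> ev i (\<Psi> w2)" unfolding Gset_def by blast
      have "length (\<Psi> w1) - 1 = length (\<Psi> w2) - 1"
        using good_ups[OF g[OF w(1)] \<omega>(1)] good_ups[OF g[OF w(2)] \<omega>(2)] by simp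
      moreover have "length (\<Psi> w1) \<noteq> 0" "length (\<Psi> w2) \<noteq> 0"
        using g[OF w(1)] g[OF w(2)] unfolding good_def by auto
      ultimately have "length (\<Psi> w1) = length (\<Psi> w2)" by linarith
      then have "\<Psi> w1 = \<Psi> w2" using ev_path[OF \<omega>(1)] ev_path[OF \<omega>(2)] by metis
      then show False using inj w by (meson inj_onD)
    qed
  qed
  have "(\<integral>\<^sup>+w. emeasure (P i) (Gset i (\<Psi> w) z) \<partial>count_space W) = emeasure (P i) (\<Union>w\<in>W. Gset i (\<Psi> w) z)"
    by (rule emeasure_UN_countable[symmetric]) (use \<open>countable W\<close> disj in auto)
  also have "\<dots> \<le> emeasure (P i) (S_at_gt (P i) X (ups_time M i j) z)"
    by (intro emeasure_mono) (use g in \<open>auto simp: ups_set_eq\<close>)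
  finally show ?thesis .
qed

end



context mrw begin

definition excp :: "'s \<Rightarrow> 's list \<Rightarrow> bool" where
  "excp j w \<longleftrightarrow> (\<exists>n\<ge>1. length w = Suc n \<and> w!n = j \<and> (\<forall>k. 1\<le>k \<longrightarrow> k<n \<longrightarrow> w!k \<noteq> j))"

definition Fset :: "'s \<Rightarrow> 's list \<Rightarrow> real \<Rightarrow> 'a set" where
  "Fset j w y = ev j w \<inter> {\<omega>\<in>space (P j). Ssum X (length w - 1) \<omega> > y}"

lemma Fset_sets[measurable]: "Fset j w y \<in> sets (P j)"
  unfolding Fset_def Ssum_def by measurable

lemma excp_hit:
  assumes "excp j w" "\<omega> \<in> ev i w"
  shows "hit_time M j \<omega> = enat (length w - 1)"
proof -
  obtain n where n: "n \<ge> 1" "length w = Suc n" "w!n = j" "\<forall>k. 1\<le>k \<longrightarrow> k<n \<longrightarrow> w!k \<noteq> j"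
    using assms(1) unfolding excp_def by blast
  have Mk: "M k \<omega> = w!k" if "k \<le> n" for k using assms(2) that n(2) by (auto simp: ev_def)
  show ?thesis using n Mk by (auto intro!: hit_eq)
qed

lemma hit_set_eq:
  "S_at_gt (P j) X (hit_time M j) y = (\<Union>w\<in>{w. excp j w}. Fset j w y)"
proof (rule set_eqI, rule iffI)
  fix \<omega> assume "\<omega> \<in> S_at_gt (P j) X (hit_time M j) y"
  then obtain n where \<omega>: "\<omega> \<in> space (P j)" "hit_time M j \<omega> = enat n" "Ssum X n \<omega> > y"
    unfolding S_at_gt_def by (cases "hit_time M j \<omega>") auto
  note h = hit_enatD[OF \<omega>(2)]
  define w where "w = map (\<lambda>k. M k \<omega>) [0..<Suc n]"
  have "excp j w" unfolding excp_def w_def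
    using h by (intro exI[of _ n]) (auto simp del: upt_Suc)
  moreover have "\<omega> \<in> Fset j w y" using \<omega> unfolding Fset_def ev_def w_def by (auto simp del: upt_Suc)
  ultimately show "\<omega> \<in> (\<Union>w\<in>{w. excp j w}. Fset j w y)" by blast
next
  fix \<omega> assume "\<omega> \<in> (\<Union>w\<in>{w. excp j w}. Fset j w y)"
  then obtain w where w: "excp j w" "\<omega> \<in> Fset j w y" by blast
  then show "\<omega> \<in> S_at_gt (P j) X (hit_time M j) y"
    using excp_hit[OF w(1)] unfolding Fset_def S_at_gt_def by auto
qed

lemma hit_set_sets[measurable]: "S_at_gt (P j) X (hit_time M j) y \<in> sets (P j)"
  unfolding hit_set_eq by (intro sets.countable_UN'') (auto intro: countableI_type)

lemma F_sum_eq: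
  assumes "\<And>w. w \<in> W \<Longrightarrow> excp j w"
  shows "emeasure (P j) (\<Union>w\<in>W. Fset j w y) = (\<integral>\<^sup>+w. emeasure (P j) (Fset j w y) \<partial>count_space W)"
proof (rule emeasure_UN_countable)
  show "countable W" by (rule countableI_type)
  show "disjoint_family_on (\<lambda>w. Fset j w y) W"
    unfolding disjoint_family_on_def
  proof (intro ballI impI)
    fix w1 w2 assume w: "w1 \<in> W" "w2 \<in> W" "w1 \<noteq> w2"
    show "Fset j w1 y \<inter> Fset j w2 y = {}"
    proof (rule ccontr)
      assume "\<not> ?thesis"
      then obtain \<omega> where \<omega>: "\<omega> \<in> ev j w1" "\<omega> \<in> ev j w2" unfolding Fset_def by blast
      have "length w1 - 1 = length w2 - 1"
        using excp_hit[OF assms[OF w(1)] \<omega>(1)] excp_hit[OF assms[OF w(2)] \<omega>(2)] by simp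
      moreover have "length w1 \<noteq> 0" "length w2 \<noteq> 0"
        using assms[OF w(1)] assms[OF w(2)] unfolding excp_def by auto
      ultimately have "length w1 = length w2" by linarith
      then have "w1 = w2" using ev_path[OF \<omega>(1)] ev_path[OF \<omega>(2)] by metis
      then show False using w by simp
    qed
  qed
qed auto

definition noi :: "'s \<Rightarrow> 's list \<Rightarrow> bool" where
  "noi i w \<longleftrightarrow> (\<forall>k<length w. w!k \<noteq> i)"

lemma hit_split:
  "emeasure (P j) (S_at_gt (P j) X (hit_time M j) y)
   \<le> emeasure (P j) (\<Union>w\<in>{w. excp j w \<and> w!0 = j \<and> noi i w}. Fset j w y)
   + emeasure (P j) (\<Union>w\<in>{w. excp j w \<and> w!0 = j \<and> \<not> noi i w}. Fset j w y)"
proof -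
  define U1 where "U1 = (\<Union>w\<in>{w. excp j w \<and> w!0 = j \<and> noi i w}. Fset j w y)"
  define U2 where "U2 = (\<Union>w\<in>{w. excp j w \<and> w!0 = j \<and> \<not> noi i w}. Fset j w y)"
  define Z where "Z = space (P j) - ev j [j]"
  have U1: "U1 \<in> sets (P j)" unfolding U1_def by (intro sets.countable_UN'') (auto intro: countableI_type)
  have U2: "U2 \<in> sets (P j)" unfolding U2_def by (intro sets.countable_UN'') (auto intro: countableI_type)
  have Z: "Z \<in> sets (P j)" unfolding Z_def by measurable
  have "measure (P j) (ev j [j]) = 1" using ev_measure[of "[j]" 0 j] by simp
  then have Z0: "emeasure (P j) Z = 0"
    unfolding Z_def using prob_space.prob_compl[OF prob, of "ev j [j]" j] emP by simp
  have sub: "S_at_gt (P j) X (hit_time M j) y \<subseteq> U1 \<union> U2 \<union> Z"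
  proof
    fix \<omega> assume "\<omega> \<in> S_at_gt (P j) X (hit_time M j) y"
    then obtain w where w: "excp j w" "\<omega> \<in> Fset j w y" unfolding hit_set_eq by blast
    show "\<omega> \<in> U1 \<union> U2 \<union> Z"
    proof (cases "w!0 = j")
      case True then show ?thesis using w unfolding U1_def U2_def by blast
    next
      case False
      then have "M 0 \<omega> \<noteq> j" using w(1,2) unfolding Fset_def ev_def excp_def by auto
      then show ?thesis using w(2) unfolding Z_def Fset_def ev_def by auto
    qed
  qed
  have "emeasure (P j) (S_at_gt (P j) X (hit_time M j) y) \<le> emeasure (P j) (U1 \<union> U2 \<union> Z)"
    using U1 U2 Z by (intro emeasure_mono[OF sub]) auto
  also have "\<dots> \<le> emeasure (P j) (U1 \<union> U2) + emeasure (P j) Z"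
    using U1 U2 Z by (intro emeasure_subadditive) auto
  also have "\<dots> \<le> emeasure (P j) U1 + emeasure (P j) U2"
    using Z0 U1 U2 by (simp add: emeasure_subadditive)
  finally show ?thesis unfolding U1_def U2_def .
qed

end



context mrw begin

definition rfirst :: "'s \<Rightarrow> 's list \<Rightarrow> nat" where
  "rfirst i w = (LEAST k. w!k = i)"

definition rot :: "'s \<Rightarrow> 's list \<Rightarrow> 's list" where
  "rot i w = (let n = length w - 1; a = rfirst i w in
     map (\<lambda>t. if t \<le> n - a then w!(t+a) else w!(t-(n-a))) [0..<Suc n])"

lemma rot_facts:
  assumes "excp j w" "w!0 = j" "\<not> noi i w" "i \<noteq> j"
  obtains n a where "length w = Suc n" "rfirst i w = a" "1 \<le> a" "a < n" "w!a = i"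
    "\<And>k. k < a \<Longrightarrow> w!k \<noteq> i" "w!n = j" "\<And>k. 1 \<le> k \<Longrightarrow> k < n \<Longrightarrow> w!k \<noteq> j"
    "length (rot i w) = Suc n"
    "\<And>t. t \<le> n \<Longrightarrow> rot i w ! t = (if t \<le> n - a then w!(t+a) else w!(t-(n-a)))"
proof -
  obtain n where n: "n \<ge> 1" "length w = Suc n" "w!n = j" "\<forall>k. 1\<le>k \<longrightarrow> k<n \<longrightarrow> w!k \<noteq> j"
    using assms(1) unfolding excp_def by blast
  obtain k0 where k0: "k0 < length w" "w!k0 = i" using assms(3) unfolding noi_def by blast
  define a where "a = rfirst i w"
  have a: "w!a = i" unfolding a_def rfirst_def by (rule LeastI[of _ k0]) (use k0 in auto)
  have amin: "w!k \<noteq> i" if "k < a" for k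
    using not_less_Least[of k "\<lambda>k. w!k = i"] that unfolding a_def rfirst_def by auto
  have "a \<le> k0" unfolding a_def rfirst_def by (rule Least_le) (use k0 in auto)
  then have "a \<le> n" using k0 n by auto
  moreover have "a \<noteq> n" using a n assms(4) by auto
  moreover have "a \<noteq> 0" using a assms(2,4) by (cases a) auto
  ultimately have a1: "1 \<le> a" "a < n" by auto
  have len: "length (rot i w) = Suc n" unfolding rot_def Let_def using n by simp
  have nth: "rot i w ! t = (if t \<le> n - a then w!(t+a) else w!(t-(n-a)))" if "t \<le> n" for t
    unfolding rot_def Let_def a_def[symmetric] using n that
    by (simp del: upt_Suc add: nth_map_upt less_Suc_eq_le)
  show ?thesis by (rule that[OF n(2) a_def[symmetric] a1 a amin n(3)]) (use n len nth in auto)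
qed

lemma rot_good:
  assumes "excp j w" "w!0 = j" "\<not> noi i w" "i \<noteq> j"
  shows "good i j (rot i w)"
proof -
  obtain n a where f: "length w = Suc n" "rfirst i w = a" "1 \<le> a" "a < n" "w!a = i"
    "\<And>k. k < a \<Longrightarrow> w!k \<noteq> i" "w!n = j" "\<And>k. 1 \<le> k \<Longrightarrow> k < n \<Longrightarrow> w!k \<noteq> j"
    "length (rot i w) = Suc n"
    "\<And>t. t \<le> n \<Longrightarrow> rot i w ! t = (if t \<le> n - a then w!(t+a) else w!(t-(n-a)))"
    by (rule rot_facts[OF assms]) blast
  have A: "rot i w ! (n - a) = j" using f by simp
  have B: "rot i w ! n = i" using f by simp
  have C: "rot i w ! k \<noteq> j" if "1 \<le> k" "k < n - a" for k
    using f(10)[of k] f(8)[of "k+a"] that f(3,4) by auto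
  have D: "rot i w ! k \<noteq> i" if "n - a < k" "k < n" for k
    using f(10)[of k] f(6)[of "k - (n-a)"] that f(3,4) by auto
  have "length (rot i w) = Suc n \<and> 1 \<le> n - a \<and> n - a < n \<and> rot i w ! (n - a) = j
     \<and> (\<forall>k. 1\<le>k \<longrightarrow> k<n - a \<longrightarrow> rot i w ! k \<noteq> j) \<and> rot i w ! n = i
     \<and> (\<forall>k. n - a<k \<longrightarrow> k<n \<longrightarrow> rot i w ! k \<noteq> i)"
    using A B C D f(3,4,9) by auto
  then show ?thesis unfolding good_def by blast
qed

lemma rot_inj:
  assumes "i \<noteq> j"
  shows "inj_on (rot i) {w. excp j w \<and> w!0 = j \<and> \<not> noi i w}"
proof (rule inj_onI)
  fix w1 w2 assume w1: "w1 \<in> {w. excp j w \<and> w!0 = j \<and> \<not> noi i w}"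
    and w2: "w2 \<in> {w. excp j w \<and> w!0 = j \<and> \<not> noi i w}" and eq: "rot i w1 = rot i w2"
  obtain n1 a1 where f1: "length w1 = Suc n1" "rfirst i w1 = a1" "1 \<le> a1" "a1 < n1" "w1!a1 = i"
    "\<And>k. k < a1 \<Longrightarrow> w1!k \<noteq> i" "w1!n1 = j" "\<And>k. 1 \<le> k \<Longrightarrow> k < n1 \<Longrightarrow> w1!k \<noteq> j"
    "length (rot i w1) = Suc n1"
    "\<And>t. t \<le> n1 \<Longrightarrow> rot i w1 ! t = (if t \<le> n1 - a1 then w1!(t+a1) else w1!(t-(n1-a1)))"
    by (rule rot_facts[of j w1 i]) (use w1 assms in auto)
  obtain n2 a2 where f2: "length w2 = Suc n2" "rfirst i w2 = a2" "1 \<le> a2" "a2 < n2" "w2!a2 = i"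
    "\<And>k. k < a2 \<Longrightarrow> w2!k \<noteq> i" "w2!n2 = j" "\<And>k. 1 \<le> k \<Longrightarrow> k < n2 \<Longrightarrow> w2!k \<noteq> j"
    "length (rot i w2) = Suc n2"
    "\<And>t. t \<le> n2 \<Longrightarrow> rot i w2 ! t = (if t \<le> n2 - a2 then w2!(t+a2) else w2!(t-(n2-a2)))"
    by (rule rot_facts[of j w2 i]) (use w2 assms in auto)
  have n: "n1 = n2" using f1(9) f2(9) eq by simp
  have a: "a1 = a2"
  proof (rule ccontr)
    assume ne: "a1 \<noteq> a2"
    show False
    proof (cases "a1 < a2")
      case True
      then have "rot i w2 ! (n2 - a2) = j" using f2 by simp
      moreover have "rot i w1 ! (n2 - a2) \<noteq> j"
        using f1(10)[of "n2 - a2"] f1(8)[of "n2 - a2 + a1"] True n f1(3,4) f2(3,4) by auto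
      ultimately show False using eq by simp
    next
      case False
      then have "a2 < a1" using ne by simp
      then have "rot i w1 ! (n1 - a1) = j" using f1 by simp
      moreover have "rot i w2 ! (n1 - a1) \<noteq> j"
        using f2(10)[of "n1 - a1"] f2(8)[of "n1 - a1 + a2"] \<open>a2 < a1\<close> n f1(3,4) f2(3,4) by auto
      ultimately show False using eq by simp
    qed
  qed
  show "w1 = w2"
  proof (rule nth_equalityI)
    show "length w1 = length w2" using f1 f2 n by simp
    fix t assume t: "t < length w1"
    show "w1 ! t = w2 ! t"
    proof (cases "t = 0")
      case True then show ?thesis using w1 w2 by simp
    next
      case False
      show ?thesis
      proof (cases "a1 \<le> t")
        case True
        then have "rot i w1 ! (t - a1) = w1 ! t" "rot i w2 ! (t - a1) = w2 ! t"
          using f1(10)[of "t - a1"] f2(10)[of "t - a1"] t f1(1) n a by auto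
        then show ?thesis using eq by simp
      next
        case le: False
        then have "rot i w1 ! (t + (n1 - a1)) = w1 ! t" "rot i w2 ! (t + (n1 - a1)) = w2 ! t"
          using f1(10)[of "t + (n1 - a1)"] f2(10)[of "t + (n1 - a1)"] t f1(1,4) n a False by auto
        then show ?thesis using eq by simp
      qed
    qed
  qed
qed

end



context mrw begin

lemma rot_eq:
  assumes "excp j w" "w!0 = j" "\<not> noi i w" "i \<noteq> j"
  shows "measure (P j) (Fset j w y) = measure (P i) (Gset i (rot i w) y)"
proof -
  obtain n a where f: "length w = Suc n" "rfirst i w = a" "1 \<le> a" "a < n" "w!a = i"
    "\<And>k. k < a \<Longrightarrow> w!k \<noteq> i" "w!n = j" "\<And>k. 1 \<le> k \<Longrightarrow> k < n \<Longrightarrow> w!k \<noteq> j"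
    "length (rot i w) = Suc n"
    "\<And>t. t \<le> n \<Longrightarrow> rot i w ! t = (if t \<le> n - a then w!(t+a) else w!(t-(n-a)))"
    by (rule rot_facts[OF assms]) blast
  define w' where "w' = rot i w"
  have w'0: "w'!0 = i" using f unfolding w'_def by simp
  define \<sigma> where "\<sigma> k = (if k \<le> a then k + (n-a) else k - a)" for k
  define \<tau> where "\<tau> t = (if t \<le> n - a then t + a else t - (n-a))" for t
  have st1: "\<sigma> k \<in> {1..n}" "\<tau> (\<sigma> k) = k" if "k \<in> {1..n}" for k
    using that f(3,4) unfolding \<sigma>_def \<tau>_def by auto
  have st2: "\<tau> t \<in> {1..n}" "\<sigma> (\<tau> t) = t" if "t \<in> {1..n}" for t
    using that f(3,4) unfolding \<sigma>_def \<tau>_def by auto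
  have wsig: "w' ! \<sigma> k = w ! k" "w' ! (\<sigma> k - 1) = w ! (k - 1)" if "k \<in> {1..n}" for k
  proof -
    show "w' ! \<sigma> k = w ! k"
      using that f(3,4) f(10)[of "\<sigma> k"] st1[OF that] unfolding w'_def \<sigma>_def by auto
    show "w' ! (\<sigma> k - 1) = w ! (k - 1)"
    proof (cases "k = 1")
      case True
      then show ?thesis using f(3,4,7) f(10)[of "n - a"] assms(2) unfolding w'_def \<sigma>_def by auto
    next
      case False
      then show ?thesis using that f(3,4) f(10)[of "\<sigma> k - 1"] unfolding w'_def \<sigma>_def by auto
    qed
  qed
  have box_eq: "measure (P j) (ev j w \<inter> {\<omega>\<in>space (P j). \<forall>k\<in>{1..n}. X k \<omega> \<in> B k})
      = 1 * measure (P i) (ev i w' \<inter> {\<omega>\<in>space (P i). \<forall>k\<in>{1..n}. X (\<sigma> k) \<omega> \<in> B k})"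
    if B: "\<And>k. B k \<in> sets borel" for B
  proof -
    have set: "{\<omega>\<in>space (P i). \<forall>k\<in>{1..n}. X (\<sigma> k) \<omega> \<in> B k}
        = {\<omega>\<in>space (P i). \<forall>t\<in>{1..n}. X t \<omega> \<in> B (\<tau> t)}"
      using st1 st2 by metis
    have "measure (P i) (ev i w' \<inter> {\<omega>\<in>space (P i). \<forall>t\<in>{1..n}. X t \<omega> \<in> B (\<tau> t)})
       = (\<Prod>t\<in>{1..n}. p (w'!(t-1)) (w'!t) * measure (K (w'!(t-1)) (w'!t)) (B (\<tau> t)))"
      using box[of w' n "\<lambda>t. B (\<tau> t)" i] f(9) w'0 B unfolding w'_def by simp
    also have "\<dots> = (\<Prod>k\<in>{1..n}. p (w!(k-1)) (w!k) * measure (K (w!(k-1)) (w!k)) (B k))"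
    proof (rule prod.reindex_bij_witness[where i=\<sigma> and j=\<tau>])
      fix k assume k: "k \<in> {1..n}"
      show "\<sigma> (\<tau> k) = k" "\<tau> k \<in> {1..n}" using st2[OF k] by auto
      show "\<tau> (\<sigma> k) = k" "\<sigma> k \<in> {1..n}" using st1[OF k] by auto
      show "p (w!(\<tau> k-1)) (w!\<tau> k) * measure (K (w!(\<tau> k-1)) (w!\<tau> k)) (B (\<tau> k))
         = p (w'!(k-1)) (w'!k) * measure (K (w'!(k-1)) (w'!k)) (B (\<tau> k))"
        using wsig[OF st2(1)[OF k]] st2[OF k] by simp
    qed
    also have "\<dots> = measure (P j) (ev j w \<inter> {\<omega>\<in>space (P j). \<forall>k\<in>{1..n}. X k \<omega> \<in> B k})"
      using box[of w n B j] f(1) assms(2) B by simp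
    finally show ?thesis using set by simp
  qed
  have T: "measure (P j) (ev j w \<inter> {\<omega>\<in>space (P j). (\<Sum>k\<in>{1..n}. X k \<omega>) > y})
      = 1 * measure (P i) (ev i w' \<inter> {\<omega>\<in>space (P i). (\<Sum>k\<in>{1..n}. X (\<sigma> k) \<omega>) > y})"
    by (rule transfer_sum[OF prob_space.finite_measure[OF prob] prob_space.finite_measure[OF prob]
          ev_sets ev_sets Xm Xm _ box_eq]) auto
  have sum: "(\<Sum>k\<in>{1..n}. X (\<sigma> k) \<omega>) = (\<Sum>k\<in>{1..n}. X k \<omega>)" for \<omega>
    by (rule sum.reindex_bij_witness[where i=\<tau> and j=\<sigma>]) (use st1 st2 in auto)
  show ?thesis using T f(1,9) unfolding sum Fset_def Gset_def Ssum_def w'_def by simp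
qed

end



lemma prod_split2:
  fixes F :: "nat \<Rightarrow> 'b::comm_monoid_mult"
  shows "(\<Prod>t\<in>{1..a+n}. F t) = (\<Prod>t\<in>{1..a}. F t) * (\<Prod>k\<in>{1..n}. F (a+k))"
proof -
  have "{1..a+n} = {1..a} \<union> {Suc a..a+n}" by auto
  then have "(\<Prod>t\<in>{1..a+n}. F t) = (\<Prod>t\<in>{1..a}. F t) * (\<Prod>t\<in>{Suc a..a+n}. F t)"
    by (simp add: prod.union_disjoint)
  also have "(\<Prod>t\<in>{Suc a..a+n}. F t) = (\<Prod>k\<in>{1..n}. F (a+k))"
    using prod.shift_bounds_cl_nat_ivl[of F 1 a n] by (simp add: add.commute)
  finally show ?thesis .
qed

lemma sum_split2:
  fixes F :: "nat \<Rightarrow> 'b::comm_monoid_add"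
  shows "(\<Sum>t\<in>{1..a+n}. F t) = (\<Sum>t\<in>{1..a}. F t) + (\<Sum>k\<in>{1..n}. F (a+k))"
proof -
  have "{1..a+n} = {1..a} \<union> {Suc a..a+n}" by auto
  then have "(\<Sum>t\<in>{1..a+n}. F t) = (\<Sum>t\<in>{1..a}. F t) + (\<Sum>t\<in>{Suc a..a+n}. F t)"
    by (simp add: sum.union_disjoint)
  also have "(\<Sum>t\<in>{Suc a..a+n}. F t) = (\<Sum>k\<in>{1..n}. F (a+k))"
    using sum.shift_bounds_cl_nat_ivl[of F 1 a n] by (simp add: add.commute)
  finally show ?thesis .
qed

locale mrw_uv = mrw P p K M X
  for P :: "'s::countable \<Rightarrow> 'a measure" and p K M X +
  fixes i j :: 's and a b :: nat and fu fv :: "nat \<Rightarrow> 's"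
  assumes ij: "i \<noteq> j"
    and a1: "1 \<le> a" and fu0: "fu 0 = i" and fua: "fu a = j"
    and fu_i: "\<And>k. 1 \<le> k \<Longrightarrow> k \<le> a \<Longrightarrow> fu k \<noteq> i" and fu_j: "\<And>k. k < a \<Longrightarrow> fu k \<noteq> j"
    and b1: "1 \<le> b" and fv0: "fv 0 = j" and fvb: "fv b = i"
    and fv_i: "\<And>k. k < b \<Longrightarrow> fv k \<noteq> i"
begin

definition cat :: "'s list \<Rightarrow> 's list" where
  "cat w = (let n = length w - 1 in
     map (\<lambda>t. if t \<le> a then fu t else if t \<le> a + n then w!(t-a) else fv (t-a-n)) [0..<Suc (a+n+b)])"

lemma cat_len: "length w = Suc n \<Longrightarrow> length (cat w) = Suc (a+n+b)"
  unfolding cat_def Let_def by simp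

lemma cat_nth: "length w = Suc n \<Longrightarrow> t \<le> a+n+b \<Longrightarrow>
   cat w ! t = (if t \<le> a then fu t else if t \<le> a + n then w!(t-a) else fv (t-a-n))"
  unfolding cat_def Let_def by (simp del: upt_Suc add: nth_map_upt less_Suc_eq_le)

lemma excpD:
  assumes "excp j w"
  obtains n where "n \<ge> 1" "length w = Suc n" "w!n = j" "\<forall>k. 1\<le>k \<longrightarrow> k<n \<longrightarrow> w!k \<noteq> j"
proof -
  obtain n where "n \<ge> 1" "length w = Suc n" "w!n = j" "\<forall>k. 1\<le>k \<longrightarrow> k<n \<longrightarrow> w!k \<noteq> j"
    using assms unfolding excp_def by blast
  then show ?thesis by (intro that[of n]) auto
qed

lemma cat_good:
  assumes "excp j w" "w!0 = j" "noi i w"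
  shows "good i j (cat w)"
proof -
  obtain n where n: "n \<ge> 1" "length w = Suc n" "w!n = j" "\<forall>k. 1\<le>k \<longrightarrow> k<n \<longrightarrow> w!k \<noteq> j"
    using assms(1) by (rule excpD)
  note nth = cat_nth[OF n(2)]
  have A: "cat w ! a = j" using nth[of a] fua by simp
  have B: "cat w ! (a+n+b) = i" using nth[of "a+n+b"] fvb b1 by simp
  have C: "cat w ! k \<noteq> j" if "1 \<le> k" "k < a" for k using nth[of k] fu_j that by simp
  have D: "cat w ! k \<noteq> i" if "a < k" "k < a+n+b" for k
  proof (cases "k \<le> a + n")
    case True
    then show ?thesis using nth[of k] that assms(3) n(2) unfolding noi_def by auto
  next
    case False
    then show ?thesis using nth[of k] that fv_i[of "k-a-n"] by auto
  qed
  have "length (cat w) = Suc (a+n+b) \<and> 1 \<le> a \<and> a < a+n+b \<and> cat w ! a = j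
     \<and> (\<forall>k. 1\<le>k \<longrightarrow> k<a \<longrightarrow> cat w ! k \<noteq> j) \<and> cat w ! (a+n+b) = i
     \<and> (\<forall>k. a<k \<longrightarrow> k<a+n+b \<longrightarrow> cat w ! k \<noteq> i)"
    using A B C D cat_len[OF n(2)] a1 n(1) by auto
  then show ?thesis unfolding good_def by blast
qed

lemma cat_inj: "inj_on cat {w. excp j w \<and> w!0 = j \<and> noi i w}"
proof (rule inj_onI)
  fix w1 w2 assume w1: "w1 \<in> {w. excp j w \<and> w!0 = j \<and> noi i w}"
    and w2: "w2 \<in> {w. excp j w \<and> w!0 = j \<and> noi i w}" and eq: "cat w1 = cat w2"
  obtain n1 where n1: "length w1 = Suc n1" using w1 excpD by blast
  obtain n2 where n2: "length w2 = Suc n2" using w2 excpD by blast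
  have n: "n1 = n2" using cat_len[OF n1] cat_len[OF n2] eq by simp
  show "w1 = w2"
  proof (rule nth_equalityI)
    show "length w1 = length w2" using n1 n2 n by simp
    fix t assume t: "t < length w1"
    show "w1 ! t = w2 ! t"
    proof (cases "t = 0")
      case True then show ?thesis using w1 w2 by simp
    next
      case False
      then have "cat w1 ! (a+t) = w1 ! t" "cat w2 ! (a+t) = w2 ! t"
        using cat_nth[OF n1, of "a+t"] cat_nth[OF n2, of "a+t"] t n1 n by auto
      then show ?thesis using eq by simp
    qed
  qed
qed

end



context mrw_uv begin

definition cu :: "real \<Rightarrow> real" where
  "cu r = (\<Prod>k\<in>{1..a}. p (fu (k-1)) (fu k) * measure (K (fu (k-1)) (fu k)) {r..})"
definition cv :: "real \<Rightarrow> real" where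
  "cv r = (\<Prod>k\<in>{1..b}. p (fv (k-1)) (fv k) * measure (K (fv (k-1)) (fv k)) {r..})"

lemma cat_le:
  assumes "excp j w" "w!0 = j" "noi i w"
  shows "cu r * cv r * measure (P j) (Fset j w y) \<le> measure (P i) (Gset i (cat w) (y + real (a+b) * r))"
proof -
  obtain n where n: "n \<ge> 1" "length w = Suc n" "w!n = j" "\<forall>k. 1\<le>k \<longrightarrow> k<n \<longrightarrow> w!k \<noteq> j"
    using assms(1) by (rule excpD)
  define w' where "w' = cat w"
  define L where "L = a + n + b"
  have lw': "length w' = Suc L" unfolding w'_def L_def using cat_len[OF n(2)] .
  have nth: "w' ! t = (if t \<le> a then fu t else if t \<le> a + n then w!(t-a) else fv (t-a-n))" if "t \<le> L" for t
    unfolding w'_def using cat_nth[OF n(2)] that unfolding L_def by simp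
  have w'0: "w'!0 = i" using nth[of 0] fu0 by simp
  define D where "D = ev i w' \<inter> {\<omega>\<in>space (P i). \<forall>t\<in>{1..L}. (t \<le> a \<or> a+n < t) \<longrightarrow> X t \<omega> \<ge> r}"
  have D: "D \<in> sets (P i)" unfolding D_def by measurable
  have box_eq: "measure (P i) (D \<inter> {\<omega>\<in>space (P i). \<forall>k\<in>{1..n}. X (a+k) \<omega> \<in> B k})
      = (cu r * cv r) * measure (P j) (ev j w \<inter> {\<omega>\<in>space (P j). \<forall>k\<in>{1..n}. X k \<omega> \<in> B k})"
    if B: "\<And>k. B k \<in> sets borel" for B
  proof -
    define B' where "B' t = (if a < t \<and> t \<le> a+n then B (t-a) else {r..})" for t
    have B': "B' t \<in> sets borel" for t using B by (simp add: B'_def)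
    have set: "D \<inter> {\<omega>\<in>space (P i). \<forall>k\<in>{1..n}. X (a+k) \<omega> \<in> B k}
       = ev i w' \<inter> {\<omega>\<in>space (P i). \<forall>t\<in>{1..L}. X t \<omega> \<in> B' t}"
    proof (rule set_eqI, rule iffI)
      fix \<omega> assume \<omega>: "\<omega> \<in> D \<inter> {\<omega>\<in>space (P i). \<forall>k\<in>{1..n}. X (a+k) \<omega> \<in> B k}"
      show "\<omega> \<in> ev i w' \<inter> {\<omega>\<in>space (P i). \<forall>t\<in>{1..L}. X t \<omega> \<in> B' t}"
      proof (safe)
        show "\<omega> \<in> ev i w'" "\<omega> \<in> space (P i)" using \<omega> unfolding D_def by auto
        fix t assume t: "t \<in> {1..L}"
        show "X t \<omega> \<in> B' t"
        proof (cases "a < t \<and> t \<le> a+n")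
          case True
          then have "t - a \<in> {1..n}" by auto
          then have "X (a + (t-a)) \<omega> \<in> B (t-a)" using \<omega> by blast
          then show ?thesis using True by (simp add: B'_def)
        next
          case False
          then show ?thesis using \<omega> t unfolding D_def B'_def by auto
        qed
      qed
    next
      fix \<omega> assume \<omega>: "\<omega> \<in> ev i w' \<inter> {\<omega>\<in>space (P i). \<forall>t\<in>{1..L}. X t \<omega> \<in> B' t}"
      have "\<forall>k\<in>{1..n}. X (a+k) \<omega> \<in> B k"
      proof
        fix k assume k: "k \<in> {1..n}"
        then have "X (a+k) \<omega> \<in> B' (a+k)" using \<omega> unfolding L_def by auto
        then show "X (a+k) \<omega> \<in> B k" using k by (simp add: B'_def)
      qed
      moreover have "\<omega> \<in> D" using \<omega> unfolding D_def B'_def by auto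
      ultimately show "\<omega> \<in> D \<inter> {\<omega>\<in>space (P i). \<forall>k\<in>{1..n}. X (a+k) \<omega> \<in> B k}" using \<omega> by auto
    qed
    define F where "F t = p (w'!(t-1)) (w'!t) * measure (K (w'!(t-1)) (w'!t)) (B' t)" for t
    have "measure (P i) (ev i w' \<inter> {\<omega>\<in>space (P i). \<forall>t\<in>{1..L}. X t \<omega> \<in> B' t}) = (\<Prod>t\<in>{1..L}. F t)"
      using box[OF lw', of B' i] B' w'0 unfolding F_def by simp
    also have "\<dots> = (\<Prod>t\<in>{1..a}. F t) * ((\<Prod>k\<in>{1..n}. F (a+k)) * (\<Prod>k\<in>{1..b}. F (a+(n+k))))"
      unfolding L_def add.assoc prod_split2 by simp
    also have "(\<Prod>t\<in>{1..a}. F t) = cu r"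
      unfolding cu_def F_def by (intro prod.cong refl) (auto simp: nth L_def B'_def)
    also have "(\<Prod>k\<in>{1..b}. F (a+(n+k))) = cv r"
      unfolding cv_def F_def
    proof (intro prod.cong refl)
      fix k assume k: "k \<in> {1..b}"
      have "w' ! (a + (n + k) - 1) = fv (k - 1)"
      proof (cases "k = 1")
        case True then show ?thesis using nth[of "a+n"] n(1,3) fv0 unfolding L_def by auto
      next
        case False then show ?thesis using nth[of "a+(n+k)-1"] k n(1) unfolding L_def by auto
      qed
      moreover have "w' ! (a + (n + k)) = fv k" using nth[of "a+(n+k)"] k n(1) unfolding L_def by auto
      ultimately show "p (w' ! (a + (n + k) - 1)) (w' ! (a + (n + k))) *
          measure (K (w' ! (a + (n + k) - 1)) (w' ! (a + (n + k)))) (B' (a + (n + k))) =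
          p (fv (k - 1)) (fv k) * measure (K (fv (k - 1)) (fv k)) {r..}"
        using k by (simp add: B'_def)
    qed
    also have "(\<Prod>k\<in>{1..n}. F (a+k)) = (\<Prod>k\<in>{1..n}. p (w!(k-1)) (w!k) * measure (K (w!(k-1)) (w!k)) (B k))"
      unfolding F_def
    proof (intro prod.cong refl)
      fix k assume k: "k \<in> {1..n}"
      have "w' ! (a + k - 1) = w ! (k - 1)"
      proof (cases "k = 1")
        case True then show ?thesis using nth[of a] fua assms(2) unfolding L_def by auto
      next
        case False then show ?thesis using nth[of "a+k-1"] k unfolding L_def by auto
      qed
      moreover have "w' ! (a + k) = w ! k" using nth[of "a+k"] k unfolding L_def by auto
      ultimately show "p (w' ! (a + k - 1)) (w' ! (a + k)) * measure (K (w' ! (a + k - 1)) (w' ! (a + k))) (B' (a + k))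
         = p (w ! (k - 1)) (w ! k) * measure (K (w ! (k - 1)) (w ! k)) (B k)"
        using k by (simp add: B'_def)
    qed
    also have "(\<Prod>k\<in>{1..n}. p (w!(k-1)) (w!k) * measure (K (w!(k-1)) (w!k)) (B k))
       = measure (P j) (ev j w \<inter> {\<omega>\<in>space (P j). \<forall>k\<in>{1..n}. X k \<omega> \<in> B k})"
      using box[OF n(2), of B j] assms(2) B by simp
    finally show ?thesis unfolding set by (simp add: algebra_simps)
  qed
  have cpos: "cu r * cv r \<ge> 0"
    unfolding cu_def cv_def by (intro mult_nonneg_nonneg prod_nonneg) (auto simp: p_nonneg)
  have T: "measure (P i) (D \<inter> {\<omega>\<in>space (P i). (\<Sum>k\<in>{1..n}. X (a+k) \<omega>) > y})
      = (cu r * cv r) * measure (P j) (ev j w \<inter> {\<omega>\<in>space (P j). (\<Sum>k\<in>{1..n}. X k \<omega>) > y})"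
    by (rule transfer_sum[OF prob_space.finite_measure[OF prob] prob_space.finite_measure[OF prob]
          D ev_sets Xm Xm cpos box_eq]) auto
  have sub: "D \<inter> {\<omega>\<in>space (P i). (\<Sum>k\<in>{1..n}. X (a+k) \<omega>) > y} \<subseteq> Gset i w' (y + real (a+b) * r)"
  proof
    fix \<omega> assume \<omega>: "\<omega> \<in> D \<inter> {\<omega>\<in>space (P i). (\<Sum>k\<in>{1..n}. X (a+k) \<omega>) > y}"
    have ge: "X t \<omega> \<ge> r" if "t \<in> {1..L}" "t \<le> a \<or> a+n < t" for t using \<omega> that unfolding D_def by auto
    have S: "Ssum X L \<omega> = (\<Sum>t\<in>{1..a}. X t \<omega>) + ((\<Sum>k\<in>{1..n}. X (a+k) \<omega>) + (\<Sum>k\<in>{1..b}. X (a+(n+k)) \<omega>))"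
      unfolding Ssum_def L_def add.assoc sum_split2 by simp
    have s1: "(\<Sum>t\<in>{1..a}. X t \<omega>) \<ge> real a * r"
      using sum_bounded_below[of "{1..a}" r "\<lambda>t. X t \<omega>"] ge unfolding L_def by auto
    have s2: "(\<Sum>k\<in>{1..b}. X (a+(n+k)) \<omega>) \<ge> real b * r"
      using sum_bounded_below[of "{1..b}" r "\<lambda>k. X (a+(n+k)) \<omega>"] ge unfolding L_def by auto
    have "Ssum X L \<omega> > y + real (a+b) * r" using S s1 s2 \<omega> by (simp add: algebra_simps)
    then show "\<omega> \<in> Gset i w' (y + real (a+b) * r)"
      using \<omega> lw' unfolding Gset_def D_def by auto
  qed
  have "cu r * cv r * measure (P j) (Fset j w y)
     = measure (P i) (D \<inter> {\<omega>\<in>space (P i). (\<Sum>k\<in>{1..n}. X (a+k) \<omega>) > y})"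
    using T n(2) unfolding Fset_def Ssum_def by simp
  also have "\<dots> \<le> measure (P i) (Gset i w' (y + real (a+b) * r))"
    by (rule finite_measure.finite_measure_mono[OF prob_space.finite_measure[OF prob] sub Gset_sets])
  finally show ?thesis unfolding w'_def .
qed

end



lemma ereal_ratio_le:
  fixes u v C :: real
  assumes "0 \<le> u" "0 \<le> v" "u \<le> C * v" "0 \<le> C"
  shows "ereal u / ereal v \<le> ereal C"
proof (cases "v = 0")
  case True
  then have "u = 0" using assms by simp
  then show ?thesis using True assms by (simp add: divide_ereal_def)
next
  case False
  then have "u / v \<le> C" using assms by (simp add: divide_le_eq)
  then show ?thesis using False by simp
qed

context mrw_uv begin

lemma part_a_ineq:
  assumes r: "r \<le> 0" and c: "cu r * cv r > 0"
  shows "measure (P j) (S_at_gt (P j) X (hit_time M j) y)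
      \<le> (1 / (cu r * cv r) + 1) * measure (P i) (S_at_gt (P i) X (ups_time M i j) (y + real (a+b) * r))"
proof -
  define c where "c = cu r * cv r"
  define z where "z = y + real (a+b) * r"
  have zy: "z \<le> y" unfolding z_def using r by (simp add: mult_nonneg_nonpos)
  define W1 where "W1 = {w. excp j w \<and> w!0 = j \<and> noi i w}"
  define W2 where "W2 = {w. excp j w \<and> w!0 = j \<and> \<not> noi i w}"
  let ?B = "\<lambda>z. S_at_gt (P i) X (ups_time M i j) z"
  have Bmono: "emeasure (P i) (?B y) \<le> emeasure (P i) (?B z)"
    using zy by (intro emeasure_mono ups_set_sets) (auto simp: S_at_gt_def)
  have "emeasure (P j) (\<Union>w\<in>W1. Fset j w y) = (\<integral>\<^sup>+w. emeasure (P j) (Fset j w y) \<partial>count_space W1)"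
    by (rule F_sum_eq) (auto simp: W1_def)
  also have "\<dots> \<le> (\<integral>\<^sup>+w. ennreal (1/c) * emeasure (P i) (Gset i (cat w) z) \<partial>count_space W1)"
  proof (intro nn_integral_mono)
    fix w assume "w \<in> space (count_space W1)"
    then have w: "excp j w" "w!0 = j" "noi i w" by (auto simp: W1_def)
    have "c * measure (P j) (Fset j w y) \<le> measure (P i) (Gset i (cat w) z)"
      using cat_le[OF w, of r y] unfolding c_def z_def by simp
    then have "measure (P j) (Fset j w y) \<le> (1/c) * measure (P i) (Gset i (cat w) z)"
      using c unfolding c_def[symmetric] by (simp add: field_simps)
    then show "emeasure (P j) (Fset j w y) \<le> ennreal (1/c) * emeasure (P i) (Gset i (cat w) z)"
      unfolding emP using c by (simp add: ennreal_mult[symmetric] c_def)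
  qed
  also have "\<dots> = ennreal (1/c) * (\<integral>\<^sup>+w. emeasure (P i) (Gset i (cat w) z) \<partial>count_space W1)"
    by (rule nn_integral_cmult) simp
  also have "\<dots> \<le> ennreal (1/c) * emeasure (P i) (?B z)"
    by (intro mult_left_mono G_sum_le) (use cat_inj cat_good in \<open>auto simp: W1_def intro: countableI_type\<close>)
  finally have U1: "emeasure (P j) (\<Union>w\<in>W1. Fset j w y) \<le> ennreal (1/c) * emeasure (P i) (?B z)" .
  have "emeasure (P j) (\<Union>w\<in>W2. Fset j w y) = (\<integral>\<^sup>+w. emeasure (P j) (Fset j w y) \<partial>count_space W2)"
    by (rule F_sum_eq) (auto simp: W2_def)
  also have "\<dots> = (\<integral>\<^sup>+w. emeasure (P i) (Gset i (rot i w) y) \<partial>count_space W2)"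
    by (intro nn_integral_cong) (use rot_eq ij in \<open>auto simp: W2_def emP\<close>)
  also have "\<dots> \<le> emeasure (P i) (?B y)"
    by (intro G_sum_le) (use rot_inj rot_good ij in \<open>auto simp: W2_def intro: countableI_type\<close>)
  finally have U2: "emeasure (P j) (\<Union>w\<in>W2. Fset j w y) \<le> emeasure (P i) (?B z)"
    using Bmono by simp
  have "emeasure (P j) (S_at_gt (P j) X (hit_time M j) y)
      \<le> ennreal (1/c) * emeasure (P i) (?B z) + emeasure (P i) (?B z)"
    using hit_split[of j y i] U1 U2 unfolding W1_def W2_def by (meson add_mono order_trans)
  also have "\<dots> = ennreal (1/c + 1) * emeasure (P i) (?B z)"
    using c by (simp add: distrib_right ennreal_plus[symmetric] c_def)
  finally have "ennreal (measure (P j) (S_at_gt (P j) X (hit_time M j) y))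
      \<le> ennreal ((1/c + 1) * measure (P i) (?B z))"
    unfolding emP using c by (simp add: ennreal_mult c_def)
  then show ?thesis unfolding c_def z_def
    using c by (subst (asm) ennreal_le_iff) (auto intro!: mult_nonneg_nonneg)
qed

end



lemma quant:
  fixes Q :: "'a measure" and g :: "nat \<Rightarrow> 'a \<Rightarrow> real"
  assumes F: "finite_measure Q" and E: "E \<in> sets Q" and g: "\<And>k. g k \<in> borel_measurable Q"
    and pos: "measure Q (E \<inter> {\<omega>\<in>space Q. (\<Sum>k\<in>{1..n}. g k \<omega>) > 0}) > 0"
  shows "\<exists>q. (\<Sum>k\<in>{1..n}. q k) > 0 \<and> measure Q (E \<inter> {\<omega>\<in>space Q. \<forall>k\<in>{1..n}. g k \<omega> \<ge> q k}) > 0"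
proof (rule ccontr)
  interpret finite_measure Q by fact
  assume neg: "\<not> ?thesis"
  define A where "A qs = (if (\<Sum>k\<in>{1..n}. of_rat (qs!(k-1)) :: real) > 0
      then E \<inter> {\<omega>\<in>space Q. \<forall>k\<in>{1..n}. g k \<omega> \<ge> of_rat (qs!(k-1))} else {})" for qs :: "rat list"
  note [measurable] = E g
  have Asets: "A qs \<in> sets Q" for qs
  proof -
    have "{\<omega> \<in> space Q. \<forall>k\<in>{1..n}. real_of_rat (qs ! (k - 1)) \<le> g k \<omega>} \<in> sets Q" by measurable
    then show ?thesis unfolding A_def using E by auto
  qed
  have Anull: "A qs \<in> null_sets Q" for qs
  proof (cases "(\<Sum>k\<in>{1..n}. of_rat (qs!(k-1)) :: real) > 0")
    case True
    then have "\<not> measure Q (E \<inter> {\<omega>\<in>space Q. \<forall>k\<in>{1..n}. g k \<omega> \<ge> of_rat (qs!(k-1))}) > 0"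
      using neg by blast
    then have "measure Q (A qs) = 0" using True unfolding A_def by (simp add: measure_le_0_iff not_less)
    then show ?thesis using Asets by (simp add: null_sets_def emeasure_eq_measure)
  qed (simp add: A_def)
  have "(\<Union>qs. A qs) \<in> null_sets Q" using Anull by blast
  moreover have sub: "E \<inter> {\<omega>\<in>space Q. (\<Sum>k\<in>{1..n}. g k \<omega>) > 0} \<subseteq> (\<Union>qs. A qs)"
  proof
    fix \<omega> assume \<omega>: "\<omega> \<in> E \<inter> {\<omega>\<in>space Q. (\<Sum>k\<in>{1..n}. g k \<omega>) > 0}"
    define s where "s = (\<Sum>k\<in>{1..n}. g k \<omega>)"
    have s: "s > 0" using \<omega> unfolding s_def by auto
    have n: "n \<ge> 1" using s unfolding s_def by (cases n) auto
    have ex: "\<exists>\<rho>. g k \<omega> - s / n < of_rat \<rho> \<and> of_rat \<rho> < g k \<omega>" for k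
      using of_rat_dense[of "g k \<omega> - s / n" "g k \<omega>"] s n by auto
    define \<rho> where "\<rho> k = (SOME \<rho>. g k \<omega> - s / n < of_rat \<rho> \<and> of_rat \<rho> < g k \<omega>)" for k
    have \<rho>: "g k \<omega> - s / n < of_rat (\<rho> k) \<and> of_rat (\<rho> k) < g k \<omega>" for k
      unfolding \<rho>_def by (rule someI_ex[OF ex])
    define qs where "qs = map (\<lambda>k. \<rho> (Suc k)) [0..<n]"
    have qs: "of_rat (qs!(k-1)) = (of_rat (\<rho> k) :: real)" if "k \<in> {1..n}" for k
      using that unfolding qs_def by auto
    have "(\<Sum>k\<in>{1..n}. of_rat (qs!(k-1)) :: real) = (\<Sum>k\<in>{1..n}. of_rat (\<rho> k))"
      using qs by (intro sum.cong) auto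
    also have "\<dots> > (\<Sum>k\<in>{1..n}. g k \<omega> - s / n)"
      using n \<rho> by (intro sum_strict_mono) auto
    also have "(\<Sum>k\<in>{1..n}. g k \<omega> - s / n) = 0"
      using n unfolding sum_subtractf s_def by simp
    finally have "(\<Sum>k\<in>{1..n}. of_rat (qs!(k-1)) :: real) > 0" .
    moreover have "\<forall>k\<in>{1..n}. g k \<omega> \<ge> of_rat (qs!(k-1))" using qs \<rho> by (auto intro: less_imp_le)
    ultimately have "\<omega> \<in> A qs" using \<omega> unfolding A_def by auto
    then show "\<omega> \<in> (\<Union>qs. A qs)" by blast
  qed
  ultimately have "E \<inter> {\<omega>\<in>space Q. (\<Sum>k\<in>{1..n}. g k \<omega>) > 0} \<in> null_sets Q"
    using E g by (intro null_sets_subset[OF _ _ sub]) auto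
  then show False using pos by (simp add: null_sets_def emeasure_eq_measure)
qed

lemma mod_pred:
  fixes s n :: nat
  assumes "0 < s" "1 \<le> n"
  shows "(s - 1) mod n = (if s mod n = 0 then n - 1 else s mod n - 1)"
proof -
  obtain s' where s: "s = Suc s'" using assms by (cases s) auto
  have "Suc s' mod n = (if Suc (s' mod n) = n then 0 else Suc (s' mod n))" by (rule mod_Suc)
  moreover have "s' mod n < n" using assms by simp
  ultimately show ?thesis unfolding s by auto
qed

lemma sum_rep:
  fixes q :: "nat \<Rightarrow> real"
  assumes "1 \<le> n"
  shows "(\<Sum>s\<in>{1..N*n}. q ((s-1) mod n + 1)) = real N * (\<Sum>k\<in>{1..n}. q k)"
proof (induction N)
  case 0 then show ?case by simp
next
  case (Suc N)
  have "(\<Sum>s\<in>{1..Suc N*n}. q ((s-1) mod n + 1)) = (\<Sum>s\<in>{1..N*n}. q ((s-1) mod n + 1)) + (\<Sum>k\<in>{1..n}. q ((N*n+k-1) mod n + 1))"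
    using sum_split2[of "\<lambda>s. q ((s-1) mod n + 1)" "N*n" n] by (simp add: add.commute)
  also have "(\<Sum>k\<in>{1..n}. q ((N*n+k-1) mod n + 1)) = (\<Sum>k\<in>{1..n}. q k)"
  proof (intro sum.cong refl)
    fix k assume k: "k \<in> {1..n}"
    then have e: "N*n+k-1 = (k - 1) + N*n" by auto
    have "(N*n+k-1) mod n = ((k - 1) + N*n) mod n" by (subst e) (rule refl)
    also have "\<dots> = (k - 1) mod n" by (rule mod_mult_self1)
    also have "\<dots> = k - 1" using k by (intro mod_less) auto
    finally have "(N*n+k-1) mod n = k - 1" .
    then show "q ((N*n+k-1) mod n + 1) = q k" using k by simp
  qed
  finally show ?case using Suc.IH by (simp add: algebra_simps)
qed




context mrw_uv begin

lemma rep_pos: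
  assumes w: "excp j w" "w!0 = j" "noi i w" and Fpos: "measure (P j) (Fset j w 0) > 0"
    and pu: "\<forall>k\<in>{1..a}. p (fu (k-1)) (fu k) > 0" and pv: "\<forall>k\<in>{1..b}. p (fv (k-1)) (fv k) > 0"
  shows "measure (P i) (S_at_gt (P i) X (ups_time M i j) 0) > 0"
proof -
  obtain n where n: "n \<ge> 1" "length w = Suc n" "w!n = j" "\<forall>k. 1\<le>k \<longrightarrow> k<n \<longrightarrow> w!k \<noteq> j"
    using w(1) by (rule excpD)
  have "measure (P j) (ev j w \<inter> {\<omega>\<in>space (P j). (\<Sum>k\<in>{1..n}. X k \<omega>) > 0}) > 0"
    using Fpos n(2) unfolding Fset_def Ssum_def by simp
  from quant[OF prob_space.finite_measure[OF prob] ev_sets Xm this]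
  obtain q where q: "(\<Sum>k\<in>{1..n}. q k) > 0"
    and qpos: "measure (P j) (ev j w \<inter> {\<omega>\<in>space (P j). \<forall>k\<in>{1..n}. X k \<omega> \<ge> q k}) > 0" by blast
  define fw where "fw k = p (w!(k-1)) (w!k) * measure (K (w!(k-1)) (w!k)) {q k..}" for k
  have "measure (P j) (ev j w \<inter> {\<omega>\<in>space (P j). \<forall>k\<in>{1..n}. X k \<omega> \<ge> q k}) = (\<Prod>k\<in>{1..n}. fw k)"
    using box[OF n(2), of "\<lambda>k. {q k..}" j] w(2) unfolding fw_def by simp
  then have fwpos: "fw k > 0" if "k \<in> {1..n}" for k
    using qpos prod_pos_each[of "{1..n}" fw k] that unfolding fw_def
    by (simp add: p_nonneg)
  obtain r where r: "r \<le> 0" and rK: "\<forall>k\<in>{1..a+b}. measure (K (if k \<le> a then fu (k-1) else fv (k-a-1))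
         (if k \<le> a then fu k else fv (k-a))) {r..} > 0"
    using K_lower_fin[of "a+b" "\<lambda>k. if k \<le> a then fu (k-1) else fv (k-a-1)" "\<lambda>k. if k \<le> a then fu k else fv (k-a)"]
    by blast
  have rKu: "measure (K (fu (k-1)) (fu k)) {r..} > 0" if "k \<in> {1..a}" for k
    using rK[rule_format, of k] that by auto
  have rKv: "measure (K (fv (k-1)) (fv k)) {r..} > 0" if "k \<in> {1..b}" for k
    using rK[rule_format, of "a+k"] that by auto
  obtain N :: nat where N: "- (real (a+b) * r) < real N * (\<Sum>k\<in>{1..n}. q k)"
    using ex_less_of_nat_mult[OF q] by blast
  define L where "L = a + N*n + b"
  define f where "f t = (if t \<le> a then fu t else if t \<le> a + N*n then w!((t-a-1) mod n + 1) else fv (t-a-N*n))" for t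
  define w' where "w' = map f [0..<Suc L]"
  have lw': "length w' = Suc L" unfolding w'_def by simp
  have nth: "w' ! t = f t" if "t \<le> L" for t
    unfolding w'_def using that by (simp del: upt_Suc add: nth_map_upt less_Suc_eq_le)
  have modn: "(t-a-1) mod n + 1 \<in> {1..n}" for t using n(1) by (auto simp: Suc_le_eq intro!: mod_less_divisor)
  have good: "good i j w'"
  proof -
    have A: "w' ! a = j" using nth[of a] fua unfolding f_def L_def by simp
    have B: "w' ! L = i" using nth[of L] fvb b1 unfolding f_def L_def by simp
    have C: "w' ! k \<noteq> j" if "1 \<le> k" "k < a" for k using nth[of k] fu_j that unfolding f_def L_def by simp
    have D: "w' ! k \<noteq> i" if "a < k" "k < L" for k
    proof (cases "k \<le> a + N*n")
      case True
      then show ?thesis using nth[of k] that w(3) n(2) modn[of k] unfolding noi_def f_def by auto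
    next
      case False
      then show ?thesis using nth[of k] that fv_i[of "k-a-N*n"] unfolding f_def L_def by auto
    qed
    have "length w' = Suc L \<and> 1 \<le> a \<and> a < L \<and> w' ! a = j
       \<and> (\<forall>k. 1\<le>k \<longrightarrow> k<a \<longrightarrow> w' ! k \<noteq> j) \<and> w' ! L = i
       \<and> (\<forall>k. a<k \<longrightarrow> k<L \<longrightarrow> w' ! k \<noteq> i)"
      using A B C D lw' a1 b1 unfolding L_def by auto
    then show ?thesis unfolding good_def by blast
  qed
  define Bx where "Bx t = (if t \<le> a \<or> a + N*n < t then {r..} else {q ((t-a-1) mod n + 1)..})" for t
  define F where "F t = p (w'!(t-1)) (w'!t) * measure (K (w'!(t-1)) (w'!t)) (Bx t)" for t
  have w'0: "w'!0 = i" using nth[of 0] fu0 unfolding f_def by simp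
  have boxm: "measure (P i) (ev i w' \<inter> {\<omega>\<in>space (P i). \<forall>t\<in>{1..L}. X t \<omega> \<in> Bx t}) = (\<Prod>t\<in>{1..L}. F t)"
    using box[OF lw', of Bx i] w'0 unfolding F_def Bx_def by simp
  have Fpos: "F t > 0" if t: "t \<in> {1..L}" for t
  proof (cases "t \<le> a")
    case True
    then have "w'!(t-1) = fu (t-1)" "w'!t = fu t" using nth[of t] nth[of "t-1"] t unfolding f_def by auto
    then show ?thesis using pu rKu[of t] t True unfolding F_def Bx_def by auto
  next
    case ta: False
    show ?thesis
    proof (cases "t \<le> a + N*n")
      case True
      define s where "s = t - a"
      have s: "1 \<le> s" "s \<le> N*n" "t = a + s" using ta True unfolding s_def by auto
      define k where "k = (s-1) mod n + 1"
      have k: "k \<in> {1..n}" unfolding k_def using n(1) by (auto simp: Suc_le_eq intro!: mod_less_divisor)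
      have ft: "w'!t = w!k" using nth[of t] s t unfolding f_def k_def by auto
      have ft1: "w'!(t-1) = w!(k-1)"
      proof (cases "s = 1")
        case True
        then have "w'!(t-1) = fu a" using nth[of a] s unfolding f_def L_def by auto
        then show ?thesis using True fua w(2) unfolding k_def by simp
      next
        case False
        then have s2: "s \<ge> 2" using s by auto
        have t1: "t - 1 \<le> L" "\<not> (t-1 \<le> a)" "t - 1 \<le> a + N*n" using s s2 unfolding L_def by auto
        have e: "t - 1 - a - 1 = s - 1 - 1" using s by simp
        have "w'!(t-1) = w!((t - 1 - a - 1) mod n + 1)" using nth[OF t1(1)] t1 unfolding f_def by simp
        then have "w'!(t-1) = w!((s - 1 - 1) mod n + 1)" unfolding e .
        moreover have "(s - 1 - 1) mod n = (if (s-1) mod n = 0 then n - 1 else (s-1) mod n - 1)"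
          using mod_pred[of "s-1" n] s2 n(1) by simp
        ultimately show ?thesis using n(1,3) w(2) unfolding k_def by (auto split: if_splits)
      qed
      have "Bx t = {q k..}" using s unfolding Bx_def k_def by auto
      then have "F t = fw k" unfolding F_def fw_def ft ft1 by simp
      then show ?thesis using fwpos[OF k] by simp
    next
      case False
      define k where "k = t - a - N*n"
      have k: "k \<in> {1..b}" "t = a + N*n + k" using False t unfolding k_def L_def by auto
      have "w'!t = fv k" using nth[of t] k t unfolding f_def by auto
      moreover have "w'!(t-1) = fv (k-1)"
      proof (cases "k = 1")
        case True
        have t1: "t - 1 \<le> L" "t - 1 = a + N*n" using True k unfolding L_def by auto
        have "w'!(t-1) = j"
        proof (cases "N*n = 0")
          case True
          then have "t - 1 = a" using t1(2) by simp
          then show ?thesis using nth[OF t1(1)] fua unfolding f_def by simp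
        next
          case False
          have m: "(N*n - 1) mod n = n - 1" using mod_pred[of "N*n" n] False n(1) by simp
          have "w'!(t-1) = w!((t - 1 - a - 1) mod n + 1)" using nth[OF t1(1)] t1(2) False unfolding f_def by simp
          also have "t - 1 - a - 1 = N*n - 1" using t1(2) by simp
          finally show ?thesis using m n(1,3) by simp
        qed
        then show ?thesis using fv0 True by simp
      next
        case False
        then show ?thesis using nth[of "t-1"] k t unfolding f_def by auto
      qed
      moreover have "Bx t = {r..}" using k unfolding Bx_def by auto
      ultimately show ?thesis using pv rKv[of k] k unfolding F_def by auto
    qed
  qed
  have prodpos: "(\<Prod>t\<in>{1..L}. F t) > 0" using Fpos by (intro prod_pos) auto
  have sub: "ev i w' \<inter> {\<omega>\<in>space (P i). \<forall>t\<in>{1..L}. X t \<omega> \<in> Bx t} \<subseteq> Gset i w' 0"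
  proof
    fix \<omega> assume \<omega>: "\<omega> \<in> ev i w' \<inter> {\<omega>\<in>space (P i). \<forall>t\<in>{1..L}. X t \<omega> \<in> Bx t}"
    have S: "Ssum X L \<omega> = (\<Sum>t\<in>{1..a}. X t \<omega>) + ((\<Sum>s\<in>{1..N*n}. X (a+s) \<omega>) + (\<Sum>k\<in>{1..b}. X (a+(N*n+k)) \<omega>))"
      unfolding Ssum_def L_def add.assoc sum_split2 by simp
    have ge1: "X t \<omega> \<ge> r" if "t \<in> {1..a}" for t
    proof -
      have "t \<in> {1..L}" using that unfolding L_def by auto
      then have "X t \<omega> \<in> Bx t" using \<omega> by blast
      then show ?thesis using that unfolding Bx_def by auto
    qed
    have ge3: "X (a+(N*n+k)) \<omega> \<ge> r" if "k \<in> {1..b}" for k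
    proof -
      have "a+(N*n+k) \<in> {1..L}" using that unfolding L_def by auto
      then have "X (a+(N*n+k)) \<omega> \<in> Bx (a+(N*n+k))" using \<omega> by blast
      then show ?thesis using that unfolding Bx_def by auto
    qed
    have s1: "(\<Sum>t\<in>{1..a}. X t \<omega>) \<ge> real a * r"
      using sum_bounded_below[of "{1..a}" r "\<lambda>t. X t \<omega>"] ge1 by auto
    have s3: "(\<Sum>k\<in>{1..b}. X (a+(N*n+k)) \<omega>) \<ge> real b * r"
      using sum_bounded_below[of "{1..b}" r "\<lambda>k. X (a+(N*n+k)) \<omega>"] ge3 by auto
    have "(\<Sum>s\<in>{1..N*n}. X (a+s) \<omega>) \<ge> (\<Sum>s\<in>{1..N*n}. q ((s-1) mod n + 1))"
    proof (intro sum_mono)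
      fix s assume s: "s \<in> {1..N*n}"
      then have "a + s \<in> {1..L}" unfolding L_def by auto
      then have "X (a+s) \<omega> \<in> Bx (a+s)" using \<omega> by blast
      then show "q ((s-1) mod n + 1) \<le> X (a+s) \<omega>" using s unfolding Bx_def by auto
    qed
    then have s2: "(\<Sum>s\<in>{1..N*n}. X (a+s) \<omega>) \<ge> real N * (\<Sum>k\<in>{1..n}. q k)"
      using sum_rep[OF n(1), of q N] by simp
    have "Ssum X L \<omega> > 0" using S s1 s2 s3 N by (simp add: algebra_simps)
    then show "\<omega> \<in> Gset i w' 0" using \<omega> lw' unfolding Gset_def by auto
  qed
  have "0 < measure (P i) (Gset i w' 0)"
    using finite_measure.finite_measure_mono[OF prob_space.finite_measure[OF prob] sub Gset_sets] boxm prodpos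
    by simp
  also have "\<dots> \<le> measure (P i) (S_at_gt (P i) X (ups_time M i j) 0)"
    by (rule finite_measure.finite_measure_mono[OF prob_space.finite_measure[OF prob] _ ups_set_sets])
       (use good in \<open>auto simp: ups_set_eq\<close>)
  finally show ?thesis .
qed

end



context mrw begin
lemma pos_union_witness:
  assumes "emeasure (P j) (\<Union>w\<in>W. Fset j w y) > 0"
  shows "\<exists>w\<in>W. measure (P j) (Fset j w y) > 0"
proof (rule ccontr)
  assume "\<not> ?thesis"
  then have "\<forall>w\<in>W. measure (P j) (Fset j w y) = 0"
    by (meson measure_nonneg not_less order.antisym)
  then have "\<forall>w\<in>W. Fset j w y \<in> null_sets (P j)"
    by (auto simp: null_sets_def emP)
  then have "(\<Union>w\<in>W. Fset j w y) \<in> null_sets (P j)"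
    by (intro null_sets_UN') (auto intro: countableI_type)
  then show False using assms by (simp add: null_sets_def)
qed
end

theorem lemma7p4:
  fixes P :: "'s::countable \<Rightarrow> 'a measure" and p :: "'s \<Rightarrow> 's \<Rightarrow> real"
    and K :: "'s \<Rightarrow> 's \<Rightarrow> real measure" and M :: "nat \<Rightarrow> 'a \<Rightarrow> 's"
    and X :: "nat \<Rightarrow> 'a \<Rightarrow> real" and i j :: 's
  assumes "MRW P p K M X" and "irreducible_chain P M" and "positive_recurrent P M"
    and "i \<noteq> j"
  shows "(\<exists>x\<ge>0. Limsup at_top (\<lambda>y::real.
             ereal (measure (P j) (S_at_gt (P j) X (hit_time M j) y))
             / ereal (measure (P i) (S_at_gt (P i) X (ups_time M i j) (y - x)))) < \<infinity>)
      \<and> (measure (P j) (S_at_gt (P j) X (hit_time M j) 0) > 0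
          \<longrightarrow> measure (P i) (S_at_gt (P i) X (ups_time M i j) 0) > 0)"
proof -
  interpret mrw P p K M X by unfold_locales (rule assms(1))
  obtain a fu where u: "ppath i j a fu" "\<forall>k. 1 \<le> k \<longrightarrow> k \<le> a \<longrightarrow> fu k \<noteq> i" "\<forall>k<a. fu k \<noteq> j"
    using shortest_path[OF assms(2,4)] by blast
  obtain b fv where v: "ppath j i b fv" "\<forall>k. 1 \<le> k \<longrightarrow> k \<le> b \<longrightarrow> fv k \<noteq> j" "\<forall>k<b. fv k \<noteq> i"
    using shortest_path[OF assms(2) assms(4)[symmetric]] by blast
  interpret U: mrw_uv P p K M X i j a b fu fv
    by unfold_locales (use assms(4) u v in \<open>auto simp: ppath_def\<close>)
  have pu: "\<forall>k\<in>{1..a}. p (fu (k-1)) (fu k) > 0" and pv: "\<forall>k\<in>{1..b}. p (fv (k-1)) (fv k) > 0"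
    using u(1) v(1) unfolding ppath_def by auto
  obtain r where r: "r \<le> 0" and rK: "\<forall>k\<in>{1..a+b}. measure (K (if k \<le> a then fu (k-1) else fv (k-a-1))
         (if k \<le> a then fu k else fv (k-a))) {r..} > 0"
    using K_lower_fin[of "a+b" "\<lambda>k. if k \<le> a then fu (k-1) else fv (k-a-1)" "\<lambda>k. if k \<le> a then fu k else fv (k-a)"]
    by blast
  have "U.cu r > 0" unfolding U.cu_def
  proof (intro prod_pos)
    fix k assume k: "k \<in> {1..a}"
    then show "0 < p (fu (k - 1)) (fu k) * measure (K (fu (k - 1)) (fu k)) {r..}"
      using pu rK[rule_format, of k] by auto
  qed
  moreover have "U.cv r > 0" unfolding U.cv_def
  proof (intro prod_pos)
    fix k assume k: "k \<in> {1..b}"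
    then show "0 < p (fv (k - 1)) (fv k) * measure (K (fv (k - 1)) (fv k)) {r..}"
      using pv rK[rule_format, of "a+k"] by auto
  qed
  ultimately have c: "U.cu r * U.cv r > 0" by simp
  define C where "C = 1 / (U.cu r * U.cv r) + 1"
  have C: "C \<ge> 0" unfolding C_def using c by simp
  define x where "x = - (real (a+b) * r)"
  have x: "x \<ge> 0" unfolding x_def using r by (simp add: mult_nonneg_nonpos)
  have partA: "\<exists>x\<ge>0. Limsup at_top (\<lambda>y::real.
             ereal (measure (P j) (S_at_gt (P j) X (hit_time M j) y))
             / ereal (measure (P i) (S_at_gt (P i) X (ups_time M i j) (y - x)))) < \<infinity>"
  proof (intro exI[of _ x] conjI x)
    have "Limsup at_top (\<lambda>y::real.
             ereal (measure (P j) (S_at_gt (P j) X (hit_time M j) y))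
             / ereal (measure (P i) (S_at_gt (P i) X (ups_time M i j) (y - x)))) \<le> ereal C"
    proof (rule Limsup_bounded, rule always_eventually, rule allI)
      fix y :: real
      have e: "y - x = y + real (a+b) * r" unfolding x_def by simp
      have ineq: "measure (P j) (S_at_gt (P j) X (hit_time M j) y)
          \<le> C * measure (P i) (S_at_gt (P i) X (ups_time M i j) (y - x))"
        using U.part_a_ineq[OF r c, of y] unfolding e C_def .
      show "ereal (measure (P j) (S_at_gt (P j) X (hit_time M j) y))
             / ereal (measure (P i) (S_at_gt (P i) X (ups_time M i j) (y - x))) \<le> ereal C"
        using ineq C by (intro ereal_ratio_le) (auto simp: measure_nonneg)
    qed
    then show "Limsup at_top (\<lambda>y::real.
             ereal (measure (P j) (S_at_gt (P j) X (hit_time M j) y))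
             / ereal (measure (P i) (S_at_gt (P i) X (ups_time M i j) (y - x)))) < \<infinity>"
      using le_less_trans by fastforce
  qed
  have partB: "measure (P j) (S_at_gt (P j) X (hit_time M j) 0) > 0
          \<longrightarrow> measure (P i) (S_at_gt (P i) X (ups_time M i j) 0) > 0"
  proof
    assume pos: "measure (P j) (S_at_gt (P j) X (hit_time M j) 0) > 0"
    define W1 where "W1 = {w. excp j w \<and> w!0 = j \<and> noi i w}"
    define W2 where "W2 = {w. excp j w \<and> w!0 = j \<and> \<not> noi i w}"
    have "0 < emeasure (P j) (S_at_gt (P j) X (hit_time M j) 0)" using pos by (simp add: emP)
    also have "\<dots> \<le> emeasure (P j) (\<Union>w\<in>W1. Fset j w 0) + emeasure (P j) (\<Union>w\<in>W2. Fset j w 0)"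
      using hit_split[of j 0 i] unfolding W1_def W2_def .
    finally have "emeasure (P j) (\<Union>w\<in>W1. Fset j w 0) > 0 \<or> emeasure (P j) (\<Union>w\<in>W2. Fset j w 0) > 0"
      by (metis add.left_neutral gr_zeroI)
    then show "measure (P i) (S_at_gt (P i) X (ups_time M i j) 0) > 0"
    proof
      assume "emeasure (P j) (\<Union>w\<in>W1. Fset j w 0) > 0"
      then obtain w where w: "w \<in> W1" "measure (P j) (Fset j w 0) > 0"
        using pos_union_witness by blast
      show ?thesis using U.rep_pos[of w] w pu pv unfolding W1_def by auto
    next
      assume "emeasure (P j) (\<Union>w\<in>W2. Fset j w 0) > 0"
      then obtain w where w: "w \<in> W2" "measure (P j) (Fset j w 0) > 0"
        using pos_union_witness by blast
      then have w2: "excp j w" "w!0 = j" "\<not> noi i w" unfolding W2_def by auto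
      have "0 < measure (P i) (Gset i (rot i w) 0)" using rot_eq[OF w2 assms(4)] w(2) by simp
      also have "\<dots> \<le> measure (P i) (S_at_gt (P i) X (ups_time M i j) 0)"
        by (rule finite_measure.finite_measure_mono[OF prob_space.finite_measure[OF prob] _ ups_set_sets])
           (use rot_good[OF w2 assms(4)] in \<open>auto simp: ups_set_eq\<close>)
      finally show ?thesis .
    qed
  qed
  show ?thesis using partA partB by blast
qed



end
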